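(* Fix $T>0$. Let $\theta:[0,T]\to[0,1]$ be continuous and let $\beta:[0,T]\to[\beta_*,\beta^*]$ be continuous. Then there exists a unique solution $\boldsymbol{x}=(S,E_{fc},E_{pc},I_{fc},I_{pc},H,R)$ on $[0,T]$ of the initial value problem \begin{align*} S' &= p_S-\Gamma S-\mu S,\\ E_{fc}' &= p_{Efc}+\theta\Gamma S-\Big(\gamma_{fc}+\gamma^{+}+\sigma_E+\mu-\tfrac{\gamma_E}{N}E_{pc}\Big)E_{fc},\\ E_{pc}' &= p_{Epc}+(1-\theta)\Gamma S-\Big(\gamma_{pc}+\gamma^{-}+\sigma_E+\mu+\tfrac{\gamma_E}{N}E_{fc}\Big)E_{pc},\\ I_{fc}' &= p_{Ifc}+\gamma_{fc}E_{fc}+\gamma^{-}E_{pc}-\Big(\delta+\sigma_I+d_I+\mu-\tfrac{\gamma_I}{N}I_{pc}\Big)I_{fc},\\ I_{pc}' &= p_{Ipc}+\gamma_{pc}E_{pc}+\gamma^{+}E_{fc}-\Big(\delta+\sigma_I+d_I+\mu+\tfrac{\gamma_I}{N}I_{fc}\Big)I_{pc},\\ H' &= p_H+\delta(I_{fc}+I_{pc})-(\sigma_H+d_H+\mu)H,\\ R' &= p_R+\sigma_E(E_{fc}+E_{pc})+\sigma_I(I_{fc}+I_{pc})+\sigma_H H-\mu R, \end{align*} with $N=S+E_{fc}+E_{pc}+I_{fc}+I_{pc}+H+R$, $\Gamma=\frac{\beta}{N}\big(\epsilon_{Efc}E_{fc}+\epsilon_{Epc}E_{pc}+\epsilon_{Ifc}I_{fc}+\epsilon_{Ipc}I_{pc}+\epsilon_H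 H\big)$, and initial data $S(0)=S_0>0$, $E_{fc}(0),E_{pc}(0),I_{fc}(0),I_{pc}(0),H(0),R(0)\ge 0$. Moreover, there is a constant $C>0$ independent of $\beta$ such that if $\boldsymbol{x}$ and $\hat{\boldsymbol{x}}$ are the solutions corresponding to two such continuous functions $\beta$ and $\hat\beta$ (with values in $[\beta_*,\beta^*]$), then for all $t\in[0,T]$, \[ |\boldsymbol{x}(t)-\hat{\boldsymbol{x}}(t)|^2\le C\int_0^t|\beta(s)-\hat\beta(s)|^2\,ds . \]
   Context: Standing assumptions: the input functions $p_S,p_{Efc},p_{Epc},p_{Ifc},p_{Ipc},p_H,p_R$ are bounded, nonnegative, smooth functions of $t$; the parameters $\mu,\epsilon_{Efc},\epsilon_{Epc},\epsilon_{Ifc},\epsilon_{Ipc},\epsilon_H,\gamma_{fc},\gamma_{pc},\gamma^{+},\gamma^{-},\delta,d_I,d_H,\sigma_E,\sigma_I,\sigma_H$ are positive constants; $\gamma_E,\gamma_I$ are real constants satisfying $|\gamma_E|<\min\{\gamma_{fc}+\gamma^{+}+\sigma_E+\mu,\ \gamma_{pc}+\gamma^{-}+\sigma_E+\mu\}$ and $|\gamma_I|<\delta+\sigma_I+d_I+\mu$; and $[\beta_*,\beta^*]\subset(0,1]$. *)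

theory Defs
  imports "HOL-Analysis.Analysis"
begin

record params =
  mu :: real
  eEfc :: real  eEpc :: real  eIfc :: real  eIpc :: real  eH :: real
  gfc :: real  gpc :: real  gplus :: real  gminus :: real
  delta :: real  dI :: real  dH :: real
  sigE :: real  sigI :: real  sigH :: real
  gamE :: real  gamI :: real
  pS :: "real \<Rightarrow> real"  pEfc :: "real \<Rightarrow> real"  pEpc :: "real \<Rightarrow> real"
  pIfc :: "real \<Rightarrow> real"  pIpc :: "real \<Rightarrow> real"  pH :: "real \<Rightarrow> real"
  pR :: "real \<Rightarrow> real"

record state =
  xS :: real  xEfc :: real  xEpc :: real  xIfc :: real  xIpc :: real
  xH :: real  xR :: real

definition smooth_fun :: "(real \<Rightarrow> real) \<Rightarrow> bool" where
  "smooth_fun f \<longleftrightarrow> (\<forall>n t. ((deriv ^^ n) f) differentiable (at t))"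

definition Ntot :: "state \<Rightarrow> real" where
  "Ntot x = xS x + xEfc x + xEpc x + xIfc x + xIpc x + xH x + xR x"

definition Gam :: "params \<Rightarrow> real \<Rightarrow> state \<Rightarrow> real" where
  "Gam P b x = b / Ntot x *
     (eEfc P * xEfc x + eEpc P * xEpc x + eIfc P * xIfc x + eIpc P * xIpc x + eH P * xH x)"

definition is_solution ::
  "params \<Rightarrow> real \<Rightarrow> (real \<Rightarrow> real) \<Rightarrow> (real \<Rightarrow> real) \<Rightarrow> state \<Rightarrow> (real \<Rightarrow> state) \<Rightarrow> bool" where
  "is_solution P T \<theta> \<beta> x0 x \<longleftrightarrow> x 0 = x0 \<and>
    (\<forall>t\<in>{0..T}.
      let y = x t; N = Ntot y; G = Gam P (\<beta> t) y in
      ((\<lambda>s. xS (x s)) has_real_derivative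
         (pS P t - G * xS y - mu P * xS y)) (at t within {0..T}) \<and>
      ((\<lambda>s. xEfc (x s)) has_real_derivative
         (pEfc P t + \<theta> t * G * xS y
          - (gfc P + gplus P + sigE P + mu P - gamE P / N * xEpc y) * xEfc y)) (at t within {0..T}) \<and>
      ((\<lambda>s. xEpc (x s)) has_real_derivative
         (pEpc P t + (1 - \<theta> t) * G * xS y
          - (gpc P + gminus P + sigE P + mu P + gamE P / N * xEfc y) * xEpc y)) (at t within {0..T}) \<and>
      ((\<lambda>s. xIfc (x s)) has_real_derivative
         (pIfc P t + gfc P * xEfc y + gminus P * xEpc y
          - (delta P + sigI P + dI P + mu P - gamI P / N * xIpc y) * xIfc y)) (at t within {0..T}) \<and>
      ((\<lambda>s. xIpc (x s)) has_real_derivative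
         (pIpc P t + gpc P * xEpc y + gplus P * xEfc y
          - (delta P + sigI P + dI P + mu P + gamI P / N * xIfc y) * xIpc y)) (at t within {0..T}) \<and>
      ((\<lambda>s. xH (x s)) has_real_derivative
         (pH P t + delta P * (xIfc y + xIpc y) - (sigH P + dH P + mu P) * xH y)) (at t within {0..T}) \<and>
      ((\<lambda>s. xR (x s)) has_real_derivative
         (pR P t + sigE P * (xEfc y + xEpc y) + sigI P * (xIfc y + xIpc y) + sigH P * xH y
          - mu P * xR y)) (at t within {0..T}))"

definition sdist2 :: "state \<Rightarrow> state \<Rightarrow> real" where
  "sdist2 x y = (xS x - xS y)\<^sup>2 + (xEfc x - xEfc y)\<^sup>2 + (xEpc x - xEpc y)\<^sup>2
     + (xIfc x - xIfc y)\<^sup>2 + (xIpc x - xIpc y)\<^sup>2 + (xH x - xH y)\<^sup>2 + (xR x - xR y)\<^sup>2"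

definition admissible_params :: "params \<Rightarrow> bool" where
  "admissible_params P \<longleftrightarrow>
    0 < mu P \<and> 0 < eEfc P \<and> 0 < eEpc P \<and> 0 < eIfc P \<and> 0 < eIpc P \<and> 0 < eH P \<and>
    0 < gfc P \<and> 0 < gpc P \<and> 0 < gplus P \<and> 0 < gminus P \<and> 0 < delta P \<and>
    0 < dI P \<and> 0 < dH P \<and> 0 < sigE P \<and> 0 < sigI P \<and> 0 < sigH P \<and>
    \<bar>gamE P\<bar> < min (gfc P + gplus P + sigE P + mu P) (gpc P + gminus P + sigE P + mu P) \<and>
    \<bar>gamI P\<bar> < delta P + sigI P + dI P + mu P \<and>
    (\<forall>p \<in> {pS P, pEfc P, pEpc P, pIfc P, pIpc P, pH P, pR P}.
       bounded (range p) \<and> (\<forall>t. 0 \<le> p t) \<and> smooth_fun p)"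

end

theory Submission
  imports Defs
begin


lemma exp_has_integral:
  fixes t cc :: real
  assumes "0 \<le> t" "0 < cc"
  shows "((\<lambda>s. exp (cc * s)) has_integral ((exp(cc * t) - 1)/cc)) {0..t}"
proof -
  have "((\<lambda>s. exp (cc * s)) has_integral ((\<lambda>s. exp (cc * s)/cc) t - (\<lambda>s. exp (cc * s)/cc) 0)) {0..t}"
  proof (rule fundamental_theorem_of_calculus[of 0 t "\<lambda>s. exp (cc * s)/cc" "\<lambda>s. exp (cc * s)"])
    fix x assume "x \<in> {0..t}"
    have "((\<lambda>s. exp (cc * s)/cc) has_real_derivative (exp (cc * x) * (cc * 1))/cc) (at x within {0..t})"
      using assms by (intro derivative_eq_intros) auto
    thus "((\<lambda>s. exp (cc * s)/cc) has_vector_derivative exp (cc * x)) (at x within {0..t})"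
      using assms by (simp add: has_real_derivative_iff_has_vector_derivative)
  qed (use assms in auto)
  thus ?thesis using assms by (simp add: diff_divide_distrib)
qed

lemma picard:
  fixes F :: "real \<Rightarrow> 'a::banach \<Rightarrow> 'a" and T L :: real
  assumes T: "0 \<le> T" and L: "0 \<le> L"
    and lip: "\<And>t x y. t \<in> {0..T} \<Longrightarrow> norm (F t x - F t y) \<le> L * norm (x - y)"
    and cont: "\<And>x. continuous_on {0..T} x \<Longrightarrow> continuous_on {0..T} (\<lambda>t. F t (x t))"
  shows "\<exists>x. x 0 = x0 \<and> (\<forall>t\<in>{0..T}. (x has_vector_derivative F t (x t)) (at t within {0..T}))"
proof -
  define X where "X = rec_nat (\<lambda>t. x0) (\<lambda>n Xn t. x0 + integral {0..t} (\<lambda>s. F s (Xn s)))"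
  have X0: "X 0 = (\<lambda>t. x0)" and XS: "\<And>n. X (Suc n) = (\<lambda>t. x0 + integral {0..t} (\<lambda>s. F s (X n s)))"
    by (simp_all add: X_def)
  have contX: "continuous_on {0..T} (X n)" for n
  proof (induction n)
    case 0 show ?case by (simp add: X0)
  next
    case (Suc n)
    have "continuous_on {0..T} (\<lambda>s. F s (X n s))" using cont Suc by blast
    hence "(\<lambda>s. F s (X n s)) integrable_on {0..T}" by (rule integrable_continuous_real)
    hence "continuous_on {0..T} (\<lambda>t. integral {0..t} (\<lambda>s. F s (X n s)))" by (rule indefinite_integral_continuous_1)
    thus ?case unfolding XS by (intro continuous_intros)
  qed
  have contG: "continuous_on {0..T} (\<lambda>s. F s (X n s))" for n using cont contX by blast
  have intG: "(\<lambda>s. F s (X n s)) integrable_on {0..t}" if "t \<in> {0..T}" for n t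
    by (rule integrable_continuous_real, rule continuous_on_subset[OF contG]) (use that in auto)
  have "compact ((\<lambda>s. F s x0) ` {0..T})"
    by (rule compact_continuous_image[OF cont]) auto
  then obtain M where M: "M > 0" "\<And>s. s \<in> {0..T} \<Longrightarrow> norm (F s x0) \<le> M"
    by (auto dest!: compact_imp_bounded simp: bounded_pos)
  define lam where "lam = 2 * L + 1"
  define D where "D = M * T"
  have lam: "lam > 0" using L by (simp add: lam_def)
  have D: "D \<ge> 0" using M T by (simp add: D_def)
  have step: "\<forall>t\<in>{0..T}. norm (X (Suc n) t - X n t) \<le> D * exp (lam * t) / 2^n" for n
  proof (induction n)
    case 0
    show ?case
    proof
      fix t assume t: "t \<in> {0..T}"
      have "norm (X (Suc 0) t - X 0 t) = norm (integral {0..t} (\<lambda>s. F s x0))" by (simp add: XS X0)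
      also have "\<dots> \<le> integral {0..t} (\<lambda>s. M)"
        using intG[OF t, of 0] t M(2) by (intro Henstock_Kurzweil_Integration.integral_norm_bound_integral) (auto simp: X0)
      also have "\<dots> = M * t" using t by simp
      also have "\<dots> \<le> D" using t M by (simp add: D_def)
      also have "\<dots> \<le> D * exp (lam * t) / 2^0" using D t lam mult_left_mono[of 1 "exp (lam * t)" D] by simp
      finally show "norm (X (Suc 0) t - X 0 t) \<le> D * exp (lam * t) / 2^0" .
    qed
  next
    case (Suc n)
    show ?case
    proof
      fix t assume t: "t \<in> {0..T}"
      have "X (Suc (Suc n)) t - X (Suc n) t = integral {0..t} (\<lambda>s. F s (X (Suc n) s) - F s (X n s))"
      proof -
        have e1: "X (Suc (Suc n)) t = x0 + integral {0..t} (\<lambda>s. F s (X (Suc n) s))" by (simp only: XS[of "Suc n"])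
        have e2: "X (Suc n) t = x0 + integral {0..t} (\<lambda>s. F s (X n s))" by (simp only: XS[of n])
        show ?thesis unfolding e1 e2 using intG[OF t] by (simp add: integral_diff)
      qed
      also have "norm \<dots> \<le> integral {0..t} (\<lambda>s. (L * D / 2^n) * exp (lam * s))"
      proof (intro Henstock_Kurzweil_Integration.integral_norm_bound_integral)
        show "(\<lambda>s. F s (X (Suc n) s) - F s (X n s)) integrable_on {0..t}" using intG[OF t] by (intro integrable_diff)
        show "(\<lambda>s. L * D / 2 ^ n * exp (lam * s)) integrable_on {0..t}"
          using exp_has_integral[of t lam] t lam by (intro integrable_on_mult_right) (auto simp: has_integral_integrable)
        fix s assume s: "s \<in> {0..t}"
        hence sT: "s \<in> {0..T}" using t by auto
        have "norm (F s (X (Suc n) s) - F s (X n s)) \<le> L * norm (X (Suc n) s - X n s)" using lip sT by blast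
        also have "\<dots> \<le> L * (D * exp (lam * s) / 2^n)" using Suc sT L by (intro mult_left_mono) auto
        finally show "norm (F s (X (Suc n) s) - F s (X n s)) \<le> L * D / 2 ^ n * exp (lam * s)" by simp
      qed
      also have "\<dots> = (L * D / 2^n) * ((exp (lam * t) - 1) / lam)"
        using exp_has_integral[of t lam] t lam by (simp add: integral_unique)
      also have "\<dots> \<le> D * exp (lam * t) / 2^(Suc n)"
      proof -
        have "L * (exp (lam * t) - 1) \<le> lam * exp (lam * t) / 2" using L by (simp add: lam_def algebra_simps)
        hence "L * (exp (lam * t) - 1) / lam \<le> exp (lam * t) / 2" using lam by (simp add: field_simps)
        hence "D / 2^n * (L * (exp (lam * t) - 1) / lam) \<le> D / 2^n * (exp (lam * t) / 2)"
          using D by (intro mult_left_mono) auto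
        thus ?thesis by (simp add: field_simps)
      qed
      finally show "norm (X (Suc (Suc n)) t - X (Suc n) t) \<le> D * exp (lam * t) / 2^(Suc n)" .
    qed
  qed
  define K where "K = D * exp (lam * T)"
  have K: "K \<ge> 0" using D by (simp add: K_def)
  have step': "norm (X (Suc n) t - X n t) \<le> K * (1/2)^n" if "t \<in> {0..T}" for n t
  proof -
    have "norm (X (Suc n) t - X n t) \<le> D * exp (lam * t) / 2^n" using step that by blast
    also have "\<dots> \<le> K / 2^n" unfolding K_def using that lam D
      by (intro divide_right_mono mult_left_mono) auto
    finally show ?thesis by (simp add: power_one_over)
  qed
  have tele: "norm (X (n + j) t - X n t) \<le> 2 * K * (1/2)^n - 2 * K * (1/2)^(n+j)" if "t \<in> {0..T}" for n j t
  proof (induction j)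
    case 0 show ?case by simp
  next
    case (Suc j)
    have "norm (X (n + Suc j) t - X n t) \<le> norm (X (Suc (n + j)) t - X (n + j) t) + norm (X (n + j) t - X n t)"
      using norm_triangle_ineq[of "X (Suc (n + j)) t - X (n + j) t" "X (n + j) t - X n t"] by simp
    also have "\<dots> \<le> K * (1/2)^(n+j) + (2 * K * (1/2)^n - 2 * K * (1/2)^(n+j))"
      using step'[OF that, of "n+j"] Suc by linarith
    also have "\<dots> = 2 * K * (1/2)^n - 2 * K * (1/2)^(n + Suc j)" by simp
    finally show ?case .
  qed
  have cauchy_bd: "norm (X m t - X n t) \<le> 2 * K * (1/2)^n" if tt: "t \<in> {0..T}" and nm: "n \<le> m" for n m t
  proof -
    obtain j where j: "m = n + j" using le_Suc_ex[OF nm] by blast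
    have "0 \<le> 2 * K * (1/2::real)^(n+j)" using K by simp
    thus ?thesis using tele[OF tt, of n j] j by simp
  qed
  have geo: "(\<lambda>n. c * (1/2::real)^n) \<longlonglongrightarrow> 0" for c
    by (intro tendsto_mult_right_zero LIMSEQ_power_zero) auto
  have conv: "(\<lambda>n. X n t) \<longlonglongrightarrow> lim (\<lambda>n. X n t)" if t: "t \<in> {0..T}" for t
  proof -
    have "Cauchy (\<lambda>n. X n t)"
    proof (rule CauchyI)
      fix e :: real assume e: "0 < e"
      from geo[of "4 * K"] e obtain N where N: "\<And>n. n \<ge> N \<Longrightarrow> norm (4 * K * (1/2)^n - 0) < e"
        unfolding LIMSEQ_def dist_norm by blast
      show "\<exists>M. \<forall>m\<ge>M. \<forall>n\<ge>M. norm (X m t - X n t) < e"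
      proof (intro exI allI impI)
        fix m n assume "m \<ge> N" "n \<ge> N"
        have "norm (X m t - X n t) \<le> norm (X m t - X N t) + norm (X n t - X N t)"
          using norm_triangle_ineq4[of "X m t - X N t" "X n t - X N t"] by simp
        also have "\<dots> \<le> 2 * K * (1/2)^N + 2 * K * (1/2)^N"
          using cauchy_bd[OF t \<open>m \<ge> N\<close>] cauchy_bd[OF t \<open>n \<ge> N\<close>] by linarith
        also have "\<dots> < e" using N[of N] K by simp
        finally show "norm (X m t - X n t) < e" .
      qed
    qed
    thus ?thesis by (simp add: Cauchy_convergent_iff convergent_LIMSEQ_iff)
  qed
  define xl where "xl t = lim (\<lambda>n. X n t)" for t
  have err: "norm (xl t - X n t) \<le> 2 * K * (1/2)^n" if t: "t \<in> {0..T}" for t n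
  proof -
    have "(\<lambda>m. norm (X m t - X n t)) \<longlonglongrightarrow> norm (xl t - X n t)"
      unfolding xl_def by (intro tendsto_intros conv t)
    thus ?thesis by (rule Lim_bounded[where M = n]) (use cauchy_bd[OF t] in auto)
  qed
  have contxl: "continuous_on {0..T} xl"
  proof (rule uniform_limit_theorem[where f = X and F = sequentially])
    show "\<forall>\<^sub>F n in sequentially. continuous_on {0..T} (X n)" using contX by simp
    show "uniform_limit {0..T} X xl sequentially"
      unfolding uniform_limit_iff
    proof (intro allI impI)
      fix e :: real assume e: "0 < e"
      from geo[of "2 * K"] e obtain N where N: "\<And>n. n \<ge> N \<Longrightarrow> norm (2 * K * (1/2)^n - 0) < e"
        unfolding LIMSEQ_def dist_norm by blast
      show "\<forall>\<^sub>F n in sequentially. \<forall>x\<in>{0..T}. dist (X n x) (xl x) < e"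
        unfolding eventually_sequentially
      proof (intro exI allI impI ballI)
        fix n x assume "N \<le> n" "x \<in> {0..T}"
        have "dist (X n x) (xl x) \<le> 2 * K * (1/2)^n" using err[OF \<open>x \<in> _\<close>, of n] by (simp add: dist_norm norm_minus_commute)
        also have "\<dots> < e" using N[OF \<open>N \<le> n\<close>] K by simp
        finally show "dist (X n x) (xl x) < e" .
      qed
    qed
  qed simp
  have contF: "continuous_on {0..T} (\<lambda>s. F s (xl s))" using cont contxl by blast
  have inteq: "xl t = x0 + integral {0..t} (\<lambda>s. F s (xl s))" if t: "t \<in> {0..T}" for t
  proof -
    have intF: "(\<lambda>s. F s (xl s)) integrable_on {0..t}"
      by (rule integrable_continuous_real, rule continuous_on_subset[OF contF]) (use t in auto)
    have "(\<lambda>n. X (Suc n) t) \<longlonglongrightarrow> xl t" unfolding xl_def by (rule LIMSEQ_Suc[OF conv[OF t]])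
    moreover have "(\<lambda>n. X (Suc n) t) \<longlonglongrightarrow> x0 + integral {0..t} (\<lambda>s. F s (xl s))"
    proof (rule LIM_zero_cancel, rule Lim_null_comparison)
      show "(\<lambda>n. T * L * (2 * K) * (1/2)^n) \<longlonglongrightarrow> 0" by (rule geo)
      show "\<forall>\<^sub>F n in sequentially. norm (X (Suc n) t - (x0 + integral {0..t} (\<lambda>s. F s (xl s)))) \<le> T * L * (2 * K) * (1/2)^n"
      proof (rule always_eventually, rule allI)
        fix n
        have "X (Suc n) t - (x0 + integral {0..t} (\<lambda>s. F s (xl s))) = integral {0..t} (\<lambda>s. F s (X n s) - F s (xl s))"
          using intG[OF t] intF by (simp add: XS integral_diff)
        also have "norm \<dots> \<le> integral {0..t} (\<lambda>s. L * (2 * K * (1/2)^n))"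
        proof (intro Henstock_Kurzweil_Integration.integral_norm_bound_integral)
          show "(\<lambda>s. F s (X n s) - F s (xl s)) integrable_on {0..t}" using intG[OF t] intF by (intro integrable_diff)
          fix s assume s: "s \<in> {0..t}"
          hence sT: "s \<in> {0..T}" using t by auto
          have "norm (F s (X n s) - F s (xl s)) \<le> L * norm (X n s - xl s)" using lip sT by blast
          also have "\<dots> \<le> L * (2 * K * (1/2)^n)" using err[OF sT, of n] L
            by (intro mult_left_mono) (auto simp: norm_minus_commute)
          finally show "norm (F s (X n s) - F s (xl s)) \<le> L * (2 * K * (1/2)^n)" .
        qed auto
        also have "\<dots> = t * (L * (2 * K * (1/2)^n))" using t by simp
        also have "\<dots> \<le> T * (L * (2 * K * (1/2)^n))" using t L K by (intro mult_right_mono) auto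
        finally show "norm (X (Suc n) t - (x0 + integral {0..t} (\<lambda>s. F s (xl s)))) \<le> T * L * (2 * K) * (1/2)^n"
          by (simp add: mult_ac)
      qed
    qed
    ultimately show ?thesis by (rule LIMSEQ_unique)
  qed
  show ?thesis
  proof (intro exI conjI ballI)
    show "xl 0 = x0" using inteq[of 0] T by simp
    fix t assume t: "t \<in> {0..T}"
    have "((\<lambda>u. x0 + integral {0..u} (\<lambda>s. F s (xl s))) has_vector_derivative F t (xl t)) (at t within {0..T})"
      using has_vector_derivative_add[OF has_vector_derivative_const integral_has_vector_derivative[OF contF t], of x0] by simp
    thus "(xl has_vector_derivative F t (xl t)) (at t within {0..T})"
      by (rule has_vector_derivative_transform[OF t inteq, rotated])
  qed
qed



lemma deriv_cont_on:
  fixes u :: "real \<Rightarrow> real"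
  assumes "\<forall>t\<in>S. (u has_real_derivative u' t) (at t within S)"
  shows "continuous_on S u"
  using assms continuous_on_eq_continuous_within DERIV_continuous by blast

lemma mono_deriv:
  fixes u u' :: "real \<Rightarrow> real"
  assumes ab: "a \<le> b" and d: "\<forall>t\<in>{a..b}. (u has_real_derivative u' t) (at t within {a..b})"
    and nn: "\<And>t. a < t \<Longrightarrow> t < b \<Longrightarrow> u' t \<ge> 0"
  shows "u a \<le> u b"
proof (rule DERIV_nonneg_imp_increasing_open[OF ab])
  show "continuous_on {a..b} u" using deriv_cont_on[OF d] .
  fix x assume x: "a < x" "x < b"
  have "(u has_real_derivative u' x) (at x within {a..b})" using d x by auto
  hence "(u has_real_derivative u' x) (at x)" using at_within_Icc_at[OF x] by simp
  thus "\<exists>y. (u has_real_derivative y) (at x) \<and> 0 \<le> y" using nn[OF x] by blast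
qed

lemma positivity:
  fixes u u' :: "real \<Rightarrow> real"
  assumes T: "0 \<le> T" and d: "\<forall>t\<in>{0..T}. (u has_real_derivative u' t) (at t within {0..T})"
    and u0: "0 \<le> u 0" and qp: "\<And>t. t \<in> {0..T} \<Longrightarrow> u t < 0 \<Longrightarrow> u' t \<ge> 0"
  shows "\<forall>t\<in>{0..T}. 0 \<le> u t"
proof (rule ccontr)
  assume "\<not> ?thesis"
  then obtain t1 where t1: "t1 \<in> {0..T}" "u t1 < 0" by force
  define A where "A = {0..t1} \<inter> u -` {0..}"
  have cont: "continuous_on {0..t1} u"
    using continuous_on_subset[OF deriv_cont_on[OF d]] t1 by auto
  have "closed A" unfolding A_def by (rule continuous_closed_preimage[OF cont]) auto
  moreover have "0 \<in> A" using u0 t1 by (auto simp: A_def)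
  moreover have bdd: "bdd_above A" unfolding A_def by (rule bdd_aboveI[of _ t1]) auto
  ultimately have SA: "Sup A \<in> A" by (intro closed_contains_Sup) auto
  define t0 where "t0 = Sup A"
  have t0: "0 \<le> t0" "t0 \<le> t1" "0 \<le> u t0" using SA by (auto simp: A_def t0_def)
  have "t0 \<noteq> t1" using t0 t1 by auto
  have "u t0 \<le> u t1"
  proof (rule mono_deriv[OF t0(2)])
    show "\<forall>t\<in>{t0..t1}. (u has_real_derivative u' t) (at t within {t0..t1})"
    proof
      fix t assume "t \<in> {t0..t1}"
      hence "t \<in> {0..T}" "{t0..t1} \<subseteq> {0..T}" using t0 t1 by auto
      thus "(u has_real_derivative u' t) (at t within {t0..t1})" using d DERIV_subset by blast
    qed
    fix t assume t: "t0 < t" "t < t1"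
    have "t \<notin> A"
    proof
      assume "t \<in> A" hence "t \<le> t0" unfolding t0_def using bdd by (rule cSup_upper)
      thus False using t by simp
    qed
    hence "u t < 0" using t t0 by (auto simp: A_def)
    thus "0 \<le> u' t" using qp t t0 t1 by auto
  qed
  thus False using t0 t1 by simp
qed

lemma gronwall:
  fixes u u' g :: "real \<Rightarrow> real"
  assumes ab: "a \<le> b" and d: "\<forall>t\<in>{a..b}. (u has_real_derivative u' t) (at t within {a..b})"
    and bd: "\<And>t. t \<in> {a..b} \<Longrightarrow> u' t \<le> A * u t + g t" and A: "0 \<le> A"
    and g: "continuous_on {a..b} g" and gnn: "\<And>t. t \<in> {a..b} \<Longrightarrow> 0 \<le> g t"
  shows "u b \<le> exp (A * (b - a)) * (u a + integral {a..b} g)"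
proof -
  define w where "w t = - (exp (- (A * (t - a))) * u t - integral {a..t} g)" for t
  define w' where "w' t = - (exp (- (A * (t - a))) * (- A) * u t + exp (- (A * (t - a))) * u' t - g t)" for t
  have "w a \<le> w b"
  proof (rule mono_deriv[OF ab])
    show "\<forall>t\<in>{a..b}. (w has_real_derivative w' t) (at t within {a..b})"
    proof
      fix t assume t: "t \<in> {a..b}"
      show "(w has_real_derivative w' t) (at t within {a..b})"
        unfolding w_def w'_def
        using d t integral_has_real_derivative[OF g t]
        by (auto intro!: derivative_eq_intros simp: algebra_simps)
    qed
    fix t assume t: "a < t" "t < b"
    hence tt: "t \<in> {a..b}" by auto
    have e1: "exp (- (A * (t - a))) \<le> 1" using A t by simp
    have "exp (- (A * (t - a))) * (u' t - A * u t) \<le> exp (- (A * (t - a))) * g t"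
      using bd[OF tt] by (intro mult_left_mono) auto
    also have "\<dots> \<le> g t" using e1 gnn[OF tt] mult_right_mono[OF e1 gnn[OF tt]] by simp
    finally show "0 \<le> w' t" unfolding w'_def by (simp add: algebra_simps)
  qed
  hence "exp (- (A * (b - a))) * u b \<le> u a + integral {a..b} g" by (simp add: w_def)
  hence "exp (A * (b - a)) * (exp (- (A * (b - a))) * u b) \<le> exp (A * (b - a)) * (u a + integral {a..b} g)"
    by (intro mult_left_mono) auto
  moreover have "exp (A * (b - a)) * exp (- (A * (b - a))) = 1" by (simp add: exp_minus)
  ultimately show ?thesis by (simp add: mult.assoc[symmetric])
qed



definition fS :: "params \<Rightarrow> (real \<Rightarrow> real) \<Rightarrow> real \<Rightarrow> real \<Rightarrow> state \<Rightarrow> real" where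
  "fS P \<theta> t b y = pS P t - Gam P b y * xS y - mu P * xS y"
definition fEfc :: "params \<Rightarrow> (real \<Rightarrow> real) \<Rightarrow> real \<Rightarrow> real \<Rightarrow> state \<Rightarrow> real" where
  "fEfc P \<theta> t b y = pEfc P t + \<theta> t * Gam P b y * xS y
          - (gfc P + gplus P + sigE P + mu P - gamE P / Ntot y * xEpc y) * xEfc y"
definition fEpc :: "params \<Rightarrow> (real \<Rightarrow> real) \<Rightarrow> real \<Rightarrow> real \<Rightarrow> state \<Rightarrow> real" where
  "fEpc P \<theta> t b y = pEpc P t + (1 - \<theta> t) * Gam P b y * xS y
          - (gpc P + gminus P + sigE P + mu P + gamE P / Ntot y * xEfc y) * xEpc y"
definition fIfc :: "params \<Rightarrow> (real \<Rightarrow> real) \<Rightarrow> real \<Rightarrow> real \<Rightarrow> state \<Rightarrow> real" where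
  "fIfc P \<theta> t b y = pIfc P t + gfc P * xEfc y + gminus P * xEpc y
          - (delta P + sigI P + dI P + mu P - gamI P / Ntot y * xIpc y) * xIfc y"
definition fIpc :: "params \<Rightarrow> (real \<Rightarrow> real) \<Rightarrow> real \<Rightarrow> real \<Rightarrow> state \<Rightarrow> real" where
  "fIpc P \<theta> t b y = pIpc P t + gpc P * xEpc y + gplus P * xEfc y
          - (delta P + sigI P + dI P + mu P + gamI P / Ntot y * xIfc y) * xIpc y"
definition fH :: "params \<Rightarrow> (real \<Rightarrow> real) \<Rightarrow> real \<Rightarrow> real \<Rightarrow> state \<Rightarrow> real" where
  "fH P \<theta> t b y = pH P t + delta P * (xIfc y + xIpc y) - (sigH P + dH P + mu P) * xH y"
definition fR :: "params \<Rightarrow> (real \<Rightarrow> real) \<Rightarrow> real \<Rightarrow> real \<Rightarrow> state \<Rightarrow> real" where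
  "fR P \<theta> t b y = pR P t + sigE P * (xEfc y + xEpc y) + sigI P * (xIfc y + xIpc y) + sigH P * xH y
          - mu P * xR y"

lemmas fdefs = fS_def fEfc_def fEpc_def fIfc_def fIpc_def fH_def fR_def

lemma sol_iff:
  "is_solution P T \<theta> \<beta> x0 x \<longleftrightarrow> x 0 = x0 \<and>
    (\<forall>t\<in>{0..T}.
      ((\<lambda>s. xS (x s)) has_real_derivative fS P \<theta> t (\<beta> t) (x t)) (at t within {0..T}) \<and>
      ((\<lambda>s. xEfc (x s)) has_real_derivative fEfc P \<theta> t (\<beta> t) (x t)) (at t within {0..T}) \<and>
      ((\<lambda>s. xEpc (x s)) has_real_derivative fEpc P \<theta> t (\<beta> t) (x t)) (at t within {0..T}) \<and>
      ((\<lambda>s. xIfc (x s)) has_real_derivative fIfc P \<theta> t (\<beta> t) (x t)) (at t within {0..T}) \<and>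
      ((\<lambda>s. xIpc (x s)) has_real_derivative fIpc P \<theta> t (\<beta> t) (x t)) (at t within {0..T}) \<and>
      ((\<lambda>s. xH (x s)) has_real_derivative fH P \<theta> t (\<beta> t) (x t)) (at t within {0..T}) \<and>
      ((\<lambda>s. xR (x s)) has_real_derivative fR P \<theta> t (\<beta> t) (x t)) (at t within {0..T}))"
  unfolding is_solution_def Let_def fdefs by simp

lemma field_sum:
  "fS P \<theta> t b y + fEfc P \<theta> t b y + fEpc P \<theta> t b y + fIfc P \<theta> t b y + fIpc P \<theta> t b y
   + fH P \<theta> t b y + fR P \<theta> t b y
   = pS P t + pEfc P t + pEpc P t + pIfc P t + pIpc P t + pH P t + pR P t
     - mu P * Ntot y - dI P * (xIfc y + xIpc y) - dH P * xH y"
  unfolding fdefs Ntot_def by (simp add: algebra_simps)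

lemma prod_bd:
  fixes x1 x2 y1 y2 A1 A2 L1 L2 e :: real
  assumes "\<bar>x1\<bar> \<le> A1" "\<bar>y2\<bar> \<le> A2" "\<bar>x1 - x2\<bar> \<le> L1 * e" "\<bar>y1 - y2\<bar> \<le> L2 * e" "0 \<le> A1" "0 \<le> A2"
  shows "\<bar>x1 * y1 - x2 * y2\<bar> \<le> (A1 * L2 + A2 * L1) * e"
proof -
  have "x1 * y1 - x2 * y2 = x1 * (y1 - y2) + y2 * (x1 - x2)" by (simp add: algebra_simps)
  hence "\<bar>x1 * y1 - x2 * y2\<bar> \<le> \<bar>x1\<bar> * \<bar>y1 - y2\<bar> + \<bar>y2\<bar> * \<bar>x1 - x2\<bar>"
    by (metis abs_mult abs_triangle_ineq)
  also have "\<dots> \<le> A1 * (L2 * e) + A2 * (L1 * e)"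
    using assms mult_mono[of "\<bar>x1\<bar>" A1 "\<bar>y1 - y2\<bar>" "L2 * e"] mult_mono[of "\<bar>y2\<bar>" A2 "\<bar>x1 - x2\<bar>" "L1 * e"]
    by (intro add_mono) auto
  finally show ?thesis by (simp add: algebra_simps)
qed

definition ddist :: "state \<Rightarrow> state \<Rightarrow> real" where
  "ddist z w = \<bar>xS z - xS w\<bar> + \<bar>xEfc z - xEfc w\<bar> + \<bar>xEpc z - xEpc w\<bar> + \<bar>xIfc z - xIfc w\<bar>
     + \<bar>xIpc z - xIpc w\<bar> + \<bar>xH z - xH w\<bar> + \<bar>xR z - xR w\<bar>"

definition Rg :: "real \<Rightarrow> real \<Rightarrow> state set" where
  "Rg m K = {z. \<bar>xS z\<bar> \<le> K \<and> \<bar>xEfc z\<bar> \<le> K \<and> \<bar>xEpc z\<bar> \<le> K \<and> \<bar>xIfc z\<bar> \<le> K \<and> \<bar>xIpc z\<bar> \<le> K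
      \<and> \<bar>xH z\<bar> \<le> K \<and> \<bar>xR z\<bar> \<le> K \<and> m \<le> Ntot z}"

lemma bounded_p:
  assumes "admissible_params P"
  shows "\<exists>A. \<forall>t. \<bar>pS P t\<bar> \<le> A \<and> \<bar>pEfc P t\<bar> \<le> A \<and> \<bar>pEpc P t\<bar> \<le> A \<and> \<bar>pIfc P t\<bar> \<le> A
     \<and> \<bar>pIpc P t\<bar> \<le> A \<and> \<bar>pH P t\<bar> \<le> A \<and> \<bar>pR P t\<bar> \<le> A"
proof -
  have "\<exists>A. \<forall>t. \<bar>p t\<bar> \<le> A" if "p \<in> {pS P, pEfc P, pEpc P, pIfc P, pIpc P, pH P, pR P}" for p
  proof -
    have "bounded (range p)" using assms that unfolding admissible_params_def by blast
    then obtain A where "\<forall>x\<in>range p. norm x \<le> A" by (auto simp: bounded_iff)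
    thus ?thesis by auto
  qed
  then obtain A1 A2 A3 A4 A5 A6 A7 where
    "\<forall>t. \<bar>pS P t\<bar> \<le> A1" "\<forall>t. \<bar>pEfc P t\<bar> \<le> A2" "\<forall>t. \<bar>pEpc P t\<bar> \<le> A3" "\<forall>t. \<bar>pIfc P t\<bar> \<le> A4"
    "\<forall>t. \<bar>pIpc P t\<bar> \<le> A5" "\<forall>t. \<bar>pH P t\<bar> \<le> A6" "\<forall>t. \<bar>pR P t\<bar> \<le> A7"
    by (metis insertCI)
  thus ?thesis
    by (intro exI[of _ "A1 + A2 + A3 + A4 + A5 + A6 + A7"]) (smt (verit))
qed

lemma cont_p:
  assumes "admissible_params P" "p \<in> {pS P, pEfc P, pEpc P, pIfc P, pIpc P, pH P, pR P}"
  shows "continuous_on S p"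
proof -
  have "smooth_fun p" using assms unfolding admissible_params_def by blast
  hence "\<forall>t. p differentiable (at t)" unfolding smooth_fun_def by (metis funpow_0)
  thus ?thesis by (simp add: continuous_at_imp_continuous_on differentiable_imp_continuous_within)
qed

lemma nonneg_p:
  assumes "admissible_params P" "p \<in> {pS P, pEfc P, pEpc P, pIfc P, pIpc P, pH P, pR P}"
  shows "0 \<le> p t"
  using assms unfolding admissible_params_def by blast

locale setting =
  fixes P :: params and \<theta> :: "real \<Rightarrow> real" and T m K :: real
  assumes adm: "admissible_params P" and thb: "\<And>t. t \<in> {0..T} \<Longrightarrow> 0 \<le> \<theta> t \<and> \<theta> t \<le> 1"
    and m: "0 < m"
begin

definition blip :: "(real \<Rightarrow> real \<Rightarrow> state \<Rightarrow> real) \<Rightarrow> bool" where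
  "blip f \<longleftrightarrow> (\<exists>A L. 0 \<le> A \<and> 0 \<le> L \<and> (\<forall>t\<in>{0..T}. \<forall>b1\<in>{0..1}. \<forall>b2\<in>{0..1}. \<forall>z\<in>Rg m K. \<forall>w\<in>Rg m K.
      \<bar>f t b1 z\<bar> \<le> A \<and> \<bar>f t b1 z - f t b2 w\<bar> \<le> L * (ddist z w + \<bar>b1 - b2\<bar>)))"

lemma blipI:
  assumes "0 \<le> A" "0 \<le> L"
    "\<And>t b1 b2 z w. t \<in> {0..T} \<Longrightarrow> b1 \<in> {0..1} \<Longrightarrow> b2 \<in> {0..1} \<Longrightarrow> z \<in> Rg m K \<Longrightarrow> w \<in> Rg m K \<Longrightarrow>
      \<bar>f t b1 z\<bar> \<le> A \<and> \<bar>f t b1 z - f t b2 w\<bar> \<le> L * (ddist z w + \<bar>b1 - b2\<bar>)"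
  shows "blip f"
  unfolding blip_def using assms by blast

lemma blipE:
  assumes "blip f"
  obtains A L where "0 \<le> A" "0 \<le> L"
    "\<And>t b1 b2 z w. t \<in> {0..T} \<Longrightarrow> b1 \<in> {0..1} \<Longrightarrow> b2 \<in> {0..1} \<Longrightarrow> z \<in> Rg m K \<Longrightarrow> w \<in> Rg m K \<Longrightarrow>
      \<bar>f t b1 z\<bar> \<le> A \<and> \<bar>f t b1 z - f t b2 w\<bar> \<le> L * (ddist z w + \<bar>b1 - b2\<bar>)"
  using assms unfolding blip_def by blast

lemma ddist_nn: "0 \<le> ddist z w" by (simp add: ddist_def)

lemma blip_const: "blip (\<lambda>t b z. c)"
  by (rule blipI[of "\<bar>c\<bar>" 0]) auto

lemma blip_time:
  assumes "\<And>t. t \<in> {0..T} \<Longrightarrow> \<bar>h t\<bar> \<le> A"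
  shows "blip (\<lambda>t b z. h t)"
  by (rule blipI[of "max A 0" 0]) (auto intro: order_trans[OF assms])

lemma blip_b: "blip (\<lambda>t b z. b)"
  by (rule blipI[of 1 1]) (auto simp: ddist_nn)

lemma blip_proj:
  assumes "\<And>z. z \<in> Rg m K \<Longrightarrow> \<bar>g z\<bar> \<le> K" "\<And>z w. \<bar>g z - g w\<bar> \<le> ddist z w"
  shows "blip (\<lambda>t b z. g z)"
proof (rule blipI[of "\<bar>K\<bar>" 1])
  fix t b1 b2 z w assume "z \<in> Rg m K" "w \<in> Rg m K"
  show "\<bar>g z\<bar> \<le> \<bar>K\<bar> \<and> \<bar>g z - g w\<bar> \<le> 1 * (ddist z w + \<bar>b1 - b2\<bar>)"
    using assms(1)[OF \<open>z \<in> _\<close>] assms(2)[of z w] by auto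
qed auto

lemma blip_xS: "blip (\<lambda>t b z. xS z)" by (rule blip_proj) (auto simp: Rg_def ddist_def)
lemma blip_xEfc: "blip (\<lambda>t b z. xEfc z)" by (rule blip_proj) (auto simp: Rg_def ddist_def)
lemma blip_xEpc: "blip (\<lambda>t b z. xEpc z)" by (rule blip_proj) (auto simp: Rg_def ddist_def)
lemma blip_xIfc: "blip (\<lambda>t b z. xIfc z)" by (rule blip_proj) (auto simp: Rg_def ddist_def)
lemma blip_xIpc: "blip (\<lambda>t b z. xIpc z)" by (rule blip_proj) (auto simp: Rg_def ddist_def)
lemma blip_xH: "blip (\<lambda>t b z. xH z)" by (rule blip_proj) (auto simp: Rg_def ddist_def)
lemma blip_xR: "blip (\<lambda>t b z. xR z)" by (rule blip_proj) (auto simp: Rg_def ddist_def)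

lemma Ntot_diff: "\<bar>Ntot z - Ntot w\<bar> \<le> ddist z w"
  unfolding Ntot_def ddist_def by (smt (verit))

lemma inv_diff:
  fixes a b mm :: real
  assumes "0 < mm" "mm \<le> a" "mm \<le> b"
  shows "\<bar>1 / a - 1 / b\<bar> \<le> \<bar>a - b\<bar> / mm^2"
proof -
  have "1 / a - 1 / b = (b - a) / (a * b)" using assms by (simp add: field_simps)
  hence "\<bar>1 / a - 1 / b\<bar> = \<bar>a - b\<bar> / (a * b)" using assms by (simp add: abs_minus_commute)
  also have "\<dots> \<le> \<bar>a - b\<bar> / mm^2"
    using assms by (intro divide_left_mono) (auto simp: power2_eq_square intro: mult_mono)
  finally show ?thesis .
qed

lemma blip_invN: "blip (\<lambda>t b z. 1 / Ntot z)"
proof (rule blipI[of "1/m" "1/m^2"])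
  fix t b1 b2 z w assume z: "z \<in> Rg m K" and w: "w \<in> Rg m K"
  have Nz: "m \<le> Ntot z" and Nw: "m \<le> Ntot w" using z w by (auto simp: Rg_def)
  have "\<bar>1 / Ntot z\<bar> \<le> 1 / m" using Nz m by (simp add: frac_le)
  moreover have "\<bar>1 / Ntot z - 1 / Ntot w\<bar> \<le> 1 / m^2 * (ddist z w + \<bar>b1 - b2\<bar>)"
  proof -
    have "\<bar>1 / Ntot z - 1 / Ntot w\<bar> \<le> \<bar>Ntot z - Ntot w\<bar> / m^2" by (rule inv_diff[OF m Nz Nw])
    also have "\<dots> \<le> (ddist z w + \<bar>b1 - b2\<bar>) / m^2"
      using Ntot_diff[of z w] by (intro divide_right_mono) auto
    finally show ?thesis by simp
  qed
  ultimately show "\<bar>1 / Ntot z\<bar> \<le> 1 / m \<and> \<bar>1 / Ntot z - 1 / Ntot w\<bar> \<le> 1 / m^2 * (ddist z w + \<bar>b1 - b2\<bar>)" ..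
qed (use m in auto)

lemma blip_add:
  assumes "blip f" "blip g"
  shows "blip (\<lambda>t b z. f t b z + g t b z)"
proof -
  obtain A1 L1 where 1: "0 \<le> A1" "0 \<le> L1"
    "\<And>t b1 b2 z w. t \<in> {0..T} \<Longrightarrow> b1 \<in> {0..1} \<Longrightarrow> b2 \<in> {0..1} \<Longrightarrow> z \<in> Rg m K \<Longrightarrow> w \<in> Rg m K \<Longrightarrow>
      \<bar>f t b1 z\<bar> \<le> A1 \<and> \<bar>f t b1 z - f t b2 w\<bar> \<le> L1 * (ddist z w + \<bar>b1 - b2\<bar>)"
    using blipE[OF assms(1)] by blast
  obtain A2 L2 where 2: "0 \<le> A2" "0 \<le> L2"
    "\<And>t b1 b2 z w. t \<in> {0..T} \<Longrightarrow> b1 \<in> {0..1} \<Longrightarrow> b2 \<in> {0..1} \<Longrightarrow> z \<in> Rg m K \<Longrightarrow> w \<in> Rg m K \<Longrightarrow>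
      \<bar>g t b1 z\<bar> \<le> A2 \<and> \<bar>g t b1 z - g t b2 w\<bar> \<le> L2 * (ddist z w + \<bar>b1 - b2\<bar>)"
    using blipE[OF assms(2)] by blast
  show ?thesis
  proof (rule blipI[of "A1 + A2" "L1 + L2"])
    fix t b1 b2 :: real and z w assume h: "t \<in> {0..T}" "b1 \<in> {0..1}" "b2 \<in> {0..1}" "z \<in> Rg m K" "w \<in> Rg m K"
    show "\<bar>f t b1 z + g t b1 z\<bar> \<le> A1 + A2 \<and>
          \<bar>f t b1 z + g t b1 z - (f t b2 w + g t b2 w)\<bar> \<le> (L1 + L2) * (ddist z w + \<bar>b1 - b2\<bar>)"
      using 1(3)[OF h] 2(3)[OF h] by (auto simp: algebra_simps)
  qed (use 1 2 in auto)
qed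

lemma blip_diff:
  assumes "blip f" "blip g"
  shows "blip (\<lambda>t b z. f t b z - g t b z)"
proof -
  obtain A1 L1 where 1: "0 \<le> A1" "0 \<le> L1"
    "\<And>t b1 b2 z w. t \<in> {0..T} \<Longrightarrow> b1 \<in> {0..1} \<Longrightarrow> b2 \<in> {0..1} \<Longrightarrow> z \<in> Rg m K \<Longrightarrow> w \<in> Rg m K \<Longrightarrow>
      \<bar>f t b1 z\<bar> \<le> A1 \<and> \<bar>f t b1 z - f t b2 w\<bar> \<le> L1 * (ddist z w + \<bar>b1 - b2\<bar>)"
    using blipE[OF assms(1)] by blast
  obtain A2 L2 where 2: "0 \<le> A2" "0 \<le> L2"
    "\<And>t b1 b2 z w. t \<in> {0..T} \<Longrightarrow> b1 \<in> {0..1} \<Longrightarrow> b2 \<in> {0..1} \<Longrightarrow> z \<in> Rg m K \<Longrightarrow> w \<in> Rg m K \<Longrightarrow>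
      \<bar>g t b1 z\<bar> \<le> A2 \<and> \<bar>g t b1 z - g t b2 w\<bar> \<le> L2 * (ddist z w + \<bar>b1 - b2\<bar>)"
    using blipE[OF assms(2)] by blast
  show ?thesis
  proof (rule blipI[of "A1 + A2" "L1 + L2"])
    fix t b1 b2 :: real and z w assume h: "t \<in> {0..T}" "b1 \<in> {0..1}" "b2 \<in> {0..1}" "z \<in> Rg m K" "w \<in> Rg m K"
    show "\<bar>f t b1 z - g t b1 z\<bar> \<le> A1 + A2 \<and>
          \<bar>f t b1 z - g t b1 z - (f t b2 w - g t b2 w)\<bar> \<le> (L1 + L2) * (ddist z w + \<bar>b1 - b2\<bar>)"
      using 1(3)[OF h] 2(3)[OF h] by (auto simp: algebra_simps)
  qed (use 1 2 in auto)
qed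

lemma blip_mult:
  assumes "blip f" "blip g"
  shows "blip (\<lambda>t b z. f t b z * g t b z)"
proof -
  obtain A1 L1 where 1: "0 \<le> A1" "0 \<le> L1"
    "\<And>t b1 b2 z w. t \<in> {0..T} \<Longrightarrow> b1 \<in> {0..1} \<Longrightarrow> b2 \<in> {0..1} \<Longrightarrow> z \<in> Rg m K \<Longrightarrow> w \<in> Rg m K \<Longrightarrow>
      \<bar>f t b1 z\<bar> \<le> A1 \<and> \<bar>f t b1 z - f t b2 w\<bar> \<le> L1 * (ddist z w + \<bar>b1 - b2\<bar>)"
    using blipE[OF assms(1)] by blast
  obtain A2 L2 where 2: "0 \<le> A2" "0 \<le> L2"
    "\<And>t b1 b2 z w. t \<in> {0..T} \<Longrightarrow> b1 \<in> {0..1} \<Longrightarrow> b2 \<in> {0..1} \<Longrightarrow> z \<in> Rg m K \<Longrightarrow> w \<in> Rg m K \<Longrightarrow>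
      \<bar>g t b1 z\<bar> \<le> A2 \<and> \<bar>g t b1 z - g t b2 w\<bar> \<le> L2 * (ddist z w + \<bar>b1 - b2\<bar>)"
    using blipE[OF assms(2)] by blast
  show ?thesis
  proof (rule blipI[of "A1 * A2" "A1 * L2 + A2 * L1"])
    fix t b1 b2 :: real and z w assume h: "t \<in> {0..T}" "b1 \<in> {0..1}" "b2 \<in> {0..1}" "z \<in> Rg m K" "w \<in> Rg m K"
    have h2: "t \<in> {0..T}" "b2 \<in> {0..1}" "b2 \<in> {0..1}" "w \<in> Rg m K" "w \<in> Rg m K" using h by auto
    have "\<bar>f t b1 z * g t b1 z\<bar> \<le> A1 * A2"
      using 1(3)[OF h] 2(3)[OF h] unfolding abs_mult by (intro mult_mono) auto
    moreover have "\<bar>f t b1 z * g t b1 z - f t b2 w * g t b2 w\<bar> \<le> (A1 * L2 + A2 * L1) * (ddist z w + \<bar>b1 - b2\<bar>)"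
      by (rule prod_bd) (use 1 2 1(3)[OF h] 2(3)[OF h] 2(3)[OF h2] in auto)
    ultimately show "\<bar>f t b1 z * g t b1 z\<bar> \<le> A1 * A2 \<and>
          \<bar>f t b1 z * g t b1 z - f t b2 w * g t b2 w\<bar> \<le> (A1 * L2 + A2 * L1) * (ddist z w + \<bar>b1 - b2\<bar>)" ..
  qed (use 1 2 in auto)
qed

lemma blip_divN:
  assumes "blip f"
  shows "blip (\<lambda>t b z. f t b z / Ntot z)"
proof -
  have "blip (\<lambda>t b z. f t b z * (1 / Ntot z))" by (rule blip_mult[OF assms blip_invN])
  thus ?thesis by simp
qed

lemma blip_theta: "blip (\<lambda>t b z. \<theta> t)"
  by (rule blip_time[of _ 1]) (use thb in auto)

lemma blip_ps:
  "blip (\<lambda>t b z. pS P t)" "blip (\<lambda>t b z. pEfc P t)" "blip (\<lambda>t b z. pEpc P t)" "blip (\<lambda>t b z. pIfc P t)"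
  "blip (\<lambda>t b z. pIpc P t)" "blip (\<lambda>t b z. pH P t)" "blip (\<lambda>t b z. pR P t)"
proof -
  obtain A where A: "\<forall>t. \<bar>pS P t\<bar> \<le> A \<and> \<bar>pEfc P t\<bar> \<le> A \<and> \<bar>pEpc P t\<bar> \<le> A \<and> \<bar>pIfc P t\<bar> \<le> A
     \<and> \<bar>pIpc P t\<bar> \<le> A \<and> \<bar>pH P t\<bar> \<le> A \<and> \<bar>pR P t\<bar> \<le> A" using bounded_p[OF adm] by blast
  show "blip (\<lambda>t b z. pS P t)" "blip (\<lambda>t b z. pEfc P t)" "blip (\<lambda>t b z. pEpc P t)" "blip (\<lambda>t b z. pIfc P t)"
    "blip (\<lambda>t b z. pIpc P t)" "blip (\<lambda>t b z. pH P t)" "blip (\<lambda>t b z. pR P t)"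
    by (rule blip_time[of _ A]; use A in blast)+
qed

lemmas blip_rules = blip_add blip_diff blip_mult blip_divN blip_b blip_theta blip_ps
  blip_xS blip_xEfc blip_xEpc blip_xIfc blip_xIpc blip_xH blip_xR blip_const

lemma blip_fields:
  "blip (\<lambda>t b z. fS P \<theta> t b z)" "blip (\<lambda>t b z. fEfc P \<theta> t b z)" "blip (\<lambda>t b z. fEpc P \<theta> t b z)"
  "blip (\<lambda>t b z. fIfc P \<theta> t b z)" "blip (\<lambda>t b z. fIpc P \<theta> t b z)" "blip (\<lambda>t b z. fH P \<theta> t b z)"
  "blip (\<lambda>t b z. fR P \<theta> t b z)"
  unfolding fdefs Gam_def by (intro blip_rules)+

end


lemma sq_sum7:
  fixes a1 a2 a3 a4 a5 a6 a7 :: real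
  shows "(a1+a2+a3+a4+a5+a6+a7)^2 \<le> 7*(a1^2+a2^2+a3^2+a4^2+a5^2+a6^2+a7^2)"
proof -
  have "7*(a1^2+a2^2+a3^2+a4^2+a5^2+a6^2+a7^2) - (a1+a2+a3+a4+a5+a6+a7)^2 =
     (a1-a2)^2+(a1-a3)^2+(a1-a4)^2+(a1-a5)^2+(a1-a6)^2+(a1-a7)^2
    +(a2-a3)^2+(a2-a4)^2+(a2-a5)^2+(a2-a6)^2+(a2-a7)^2
    +(a3-a4)^2+(a3-a5)^2+(a3-a6)^2+(a3-a7)^2
    +(a4-a5)^2+(a4-a6)^2+(a4-a7)^2
    +(a5-a6)^2+(a5-a7)^2+(a6-a7)^2"
    by (simp add: power2_eq_square algebra_simps)
  moreover have "0 \<le> (a1-a2)^2+(a1-a3)^2+(a1-a4)^2+(a1-a5)^2+(a1-a6)^2+(a1-a7)^2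
    +(a2-a3)^2+(a2-a4)^2+(a2-a5)^2+(a2-a6)^2+(a2-a7)^2
    +(a3-a4)^2+(a3-a5)^2+(a3-a6)^2+(a3-a7)^2
    +(a4-a5)^2+(a4-a6)^2+(a4-a7)^2
    +(a5-a6)^2+(a5-a7)^2+(a6-a7)^2" by simp
  ultimately show ?thesis by linarith
qed

lemma dg_le:
  fixes d g c :: real
  assumes "\<bar>g\<bar> \<le> c"
  shows "2 * d * g \<le> 2 * \<bar>d\<bar> * c"
proof -
  have "d * g \<le> \<bar>d\<bar> * \<bar>g\<bar>" by (metis abs_ge_self abs_mult)
  also have "\<dots> \<le> \<bar>d\<bar> * c" using assms by (intro mult_left_mono) auto
  finally show ?thesis by simp
qed

lemma key_ineq:
  fixes d1 d2 d3 d4 d5 d6 d7 g1 g2 g3 g4 g5 g6 g7 L e :: real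
  defines "D \<equiv> \<bar>d1\<bar>+\<bar>d2\<bar>+\<bar>d3\<bar>+\<bar>d4\<bar>+\<bar>d5\<bar>+\<bar>d6\<bar>+\<bar>d7\<bar>"
  assumes L: "0 \<le> L" and e: "0 \<le> e"
    and g: "\<bar>g1\<bar> \<le> L * (D + e)" "\<bar>g2\<bar> \<le> L * (D + e)" "\<bar>g3\<bar> \<le> L * (D + e)" "\<bar>g4\<bar> \<le> L * (D + e)"
      "\<bar>g5\<bar> \<le> L * (D + e)" "\<bar>g6\<bar> \<le> L * (D + e)" "\<bar>g7\<bar> \<le> L * (D + e)"
  shows "2*d1*g1 + 2*d2*g2 + 2*d3*g3 + 2*d4*g4 + 2*d5*g5 + 2*d6*g6 + 2*d7*g7
     \<le> 21 * L * (d1^2 + d2^2 + d3^2 + d4^2 + d5^2 + d6^2 + d7^2) + L * e^2"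
proof -
  have "2*d1*g1 + 2*d2*g2 + 2*d3*g3 + 2*d4*g4 + 2*d5*g5 + 2*d6*g6 + 2*d7*g7
     \<le> 2*\<bar>d1\<bar>*(L*(D+e)) + 2*\<bar>d2\<bar>*(L*(D+e)) + 2*\<bar>d3\<bar>*(L*(D+e)) + 2*\<bar>d4\<bar>*(L*(D+e))
      + 2*\<bar>d5\<bar>*(L*(D+e)) + 2*\<bar>d6\<bar>*(L*(D+e)) + 2*\<bar>d7\<bar>*(L*(D+e))"
    using dg_le[OF g(1), of d1] dg_le[OF g(2), of d2] dg_le[OF g(3), of d3] dg_le[OF g(4), of d4]
      dg_le[OF g(5), of d5] dg_le[OF g(6), of d6] dg_le[OF g(7), of d7] by linarith
  also have "\<dots> = 2 * L * D^2 + L * (2 * D * e)" unfolding D_def power2_eq_square by algebra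
  also have "\<dots> \<le> 2 * L * D^2 + L * (D^2 + e^2)"
  proof -
    have "2 * D * e \<le> D^2 + e^2" using sum_squares_bound[of D e] by simp
    thus ?thesis using L by (intro add_left_mono mult_left_mono) auto
  qed
  also have "\<dots> = 3 * L * D^2 + L * e^2" by (simp add: algebra_simps)
  also have "\<dots> \<le> 3 * L * (7 * (d1^2 + d2^2 + d3^2 + d4^2 + d5^2 + d6^2 + d7^2)) + L * e^2"
    using sq_sum7[of "\<bar>d1\<bar>" "\<bar>d2\<bar>" "\<bar>d3\<bar>" "\<bar>d4\<bar>" "\<bar>d5\<bar>" "\<bar>d6\<bar>" "\<bar>d7\<bar>"] L
    unfolding D_def by (intro add_right_mono mult_left_mono) auto
  finally show ?thesis by (simp add: algebra_simps)
qed

context setting begin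

definition lipc :: "(real \<Rightarrow> real \<Rightarrow> state \<Rightarrow> real) \<Rightarrow> real \<Rightarrow> bool" where
  "lipc f L \<longleftrightarrow> (\<forall>t\<in>{0..T}. \<forall>b1\<in>{0..1}. \<forall>b2\<in>{0..1}. \<forall>z\<in>Rg m K. \<forall>w\<in>Rg m K.
      \<bar>f t b1 z - f t b2 w\<bar> \<le> L * (ddist z w + \<bar>b1 - b2\<bar>))"

lemma blip_lipc: "blip f \<Longrightarrow> \<exists>L\<ge>0. lipc f L"
  unfolding blip_def lipc_def by blast

lemma lipc_mono:
  assumes "lipc f L" "L \<le> L'"
  shows "lipc f L'"
  unfolding lipc_def
proof (intro ballI)
  fix t b1 b2 z w assume h: "t \<in> {0..T}" "b1 \<in> {0..1::real}" "b2 \<in> {0..1::real}" "z \<in> Rg m K" "w \<in> Rg m K"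
  have "\<bar>f t b1 z - f t b2 w\<bar> \<le> L * (ddist z w + \<bar>b1 - b2\<bar>)" using assms(1) h unfolding lipc_def by blast
  also have "\<dots> \<le> L' * (ddist z w + \<bar>b1 - b2\<bar>)" using assms(2) ddist_nn[of z w] by (intro mult_right_mono) auto
  finally show "\<bar>f t b1 z - f t b2 w\<bar> \<le> L' * (ddist z w + \<bar>b1 - b2\<bar>)" .
qed

lemma fields_lipc:
  "\<exists>L\<ge>0. lipc (\<lambda>t b z. fS P \<theta> t b z) L \<and> lipc (\<lambda>t b z. fEfc P \<theta> t b z) L \<and> lipc (\<lambda>t b z. fEpc P \<theta> t b z) L
     \<and> lipc (\<lambda>t b z. fIfc P \<theta> t b z) L \<and> lipc (\<lambda>t b z. fIpc P \<theta> t b z) L \<and> lipc (\<lambda>t b z. fH P \<theta> t b z) L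
     \<and> lipc (\<lambda>t b z. fR P \<theta> t b z) L"
proof -
  obtain L1 where 1: "L1 \<ge> 0" "lipc (\<lambda>t b z. fS P \<theta> t b z) L1" using blip_lipc[OF blip_fields(1)] by blast
  obtain L2 where 2: "L2 \<ge> 0" "lipc (\<lambda>t b z. fEfc P \<theta> t b z) L2" using blip_lipc[OF blip_fields(2)] by blast
  obtain L3 where 3: "L3 \<ge> 0" "lipc (\<lambda>t b z. fEpc P \<theta> t b z) L3" using blip_lipc[OF blip_fields(3)] by blast
  obtain L4 where 4: "L4 \<ge> 0" "lipc (\<lambda>t b z. fIfc P \<theta> t b z) L4" using blip_lipc[OF blip_fields(4)] by blast
  obtain L5 where 5: "L5 \<ge> 0" "lipc (\<lambda>t b z. fIpc P \<theta> t b z) L5" using blip_lipc[OF blip_fields(5)] by blast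
  obtain L6 where 6: "L6 \<ge> 0" "lipc (\<lambda>t b z. fH P \<theta> t b z) L6" using blip_lipc[OF blip_fields(6)] by blast
  obtain L7 where 7: "L7 \<ge> 0" "lipc (\<lambda>t b z. fR P \<theta> t b z) L7" using blip_lipc[OF blip_fields(7)] by blast
  define LL where "LL = L1+L2+L3+L4+L5+L6+L7"
  have "0 \<le> LL" "L1 \<le> LL" "L2 \<le> LL" "L3 \<le> LL" "L4 \<le> LL" "L5 \<le> LL" "L6 \<le> LL" "L7 \<le> LL"
    using 1 2 3 4 5 6 7 unfolding LL_def by linarith+
  thus ?thesis
    using lipc_mono[OF 1(2)] lipc_mono[OF 2(2)] lipc_mono[OF 3(2)] lipc_mono[OF 4(2)]
      lipc_mono[OF 5(2)] lipc_mono[OF 6(2)] lipc_mono[OF 7(2)] by blast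
qed

end



definition cl :: "real \<Rightarrow> real \<Rightarrow> real \<Rightarrow> real" where "cl lo hi v = max lo (min hi v)"

lemma cl_lip: "\<bar>cl lo hi a - cl lo hi b\<bar> \<le> \<bar>a - b\<bar>"
  unfolding cl_def max_def min_def by (auto simp: abs_if)

type_synonym t7 = "real \<times> real \<times> real \<times> real \<times> real \<times> real \<times> real"

definition st :: "t7 \<Rightarrow> state" where
  "st v = \<lparr>xS = fst v, xEfc = fst (snd v), xEpc = fst (snd (snd v)), xIfc = fst (snd (snd (snd v))),
     xIpc = fst (snd (snd (snd (snd v)))), xH = fst (snd (snd (snd (snd (snd v))))),
     xR = snd (snd (snd (snd (snd (snd v)))))\<rparr>"

definition tp :: "state \<Rightarrow> t7" where
  "tp y = (xS y, xEfc y, xEpc y, xIfc y, xIpc y, xH y, xR y)"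

lemma st_tp[simp]: "st (tp y) = y" by (simp add: st_def tp_def)

lemma norm7: "norm ((a,b,c,d,e,f,g)::t7) \<le> \<bar>a\<bar>+\<bar>b\<bar>+\<bar>c\<bar>+\<bar>d\<bar>+\<bar>e\<bar>+\<bar>f\<bar>+\<bar>g\<bar>"
  using norm_Pair_le[of a "(b,c,d,e,f,g)"] norm_Pair_le[of b "(c,d,e,f,g)"] norm_Pair_le[of c "(d,e,f,g)"]
    norm_Pair_le[of d "(e,f,g)"] norm_Pair_le[of e "(f,g)"] norm_Pair_le[of f g]
  unfolding real_norm_def by linarith

lemma nfst: "norm (fst v) \<le> norm v" by (metis norm_fst_le prod.collapse)
lemma nsnd: "norm (snd v) \<le> norm v" by (metis norm_snd_le prod.collapse)

lemma ddist_st: "ddist (st v) (st w) \<le> 7 * norm (v - w)"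
proof -
  define u where "u = v - w"
  have c1: "\<bar>fst v - fst w\<bar> \<le> norm (v - w)" using nfst[of u] by (simp add: u_def)
  have c2: "\<bar>fst (snd v) - fst (snd w)\<bar> \<le> norm (v - w)" using nfst[of "snd u"] nsnd[of u] by (simp add: u_def; linarith)
  have c3: "\<bar>fst (snd (snd v)) - fst (snd (snd w))\<bar> \<le> norm (v - w)"
    using nfst[of "snd (snd u)"] nsnd[of "snd u"] nsnd[of u] by (simp add: u_def; linarith)
  have c4: "\<bar>fst (snd (snd (snd v))) - fst (snd (snd (snd w)))\<bar> \<le> norm (v - w)"
    using nfst[of "snd (snd (snd u))"] nsnd[of "snd (snd u)"] nsnd[of "snd u"] nsnd[of u] by (simp add: u_def; linarith)
  have c5: "\<bar>fst (snd (snd (snd (snd v)))) - fst (snd (snd (snd (snd w))))\<bar> \<le> norm (v - w)"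
    using nfst[of "snd (snd (snd (snd u)))"] nsnd[of "snd (snd (snd u))"] nsnd[of "snd (snd u)"] nsnd[of "snd u"] nsnd[of u]
    by (simp add: u_def; linarith)
  have c6: "\<bar>fst (snd (snd (snd (snd (snd v))))) - fst (snd (snd (snd (snd (snd w)))))\<bar> \<le> norm (v - w)"
    using nfst[of "snd (snd (snd (snd (snd u))))"] nsnd[of "snd (snd (snd (snd u)))"] nsnd[of "snd (snd (snd u))"]
      nsnd[of "snd (snd u)"] nsnd[of "snd u"] nsnd[of u]
    by (simp add: u_def; linarith)
  have c7: "\<bar>snd (snd (snd (snd (snd (snd v))))) - snd (snd (snd (snd (snd (snd w)))))\<bar> \<le> norm (v - w)"
    using nsnd[of "snd (snd (snd (snd (snd u))))"] nsnd[of "snd (snd (snd (snd u)))"] nsnd[of "snd (snd (snd u))"]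
      nsnd[of "snd (snd u)"] nsnd[of "snd u"] nsnd[of u]
    by (simp add: u_def; linarith)
  show ?thesis unfolding ddist_def st_def using c1 c2 c3 c4 c5 c6 c7 by (simp; linarith)
qed

lemma vd_fst: "(v has_vector_derivative V) F \<Longrightarrow> ((\<lambda>s. fst (v s)) has_real_derivative fst V) F"
  using bounded_linear.has_vector_derivative[OF bounded_linear_fst]
  by (simp add: has_real_derivative_iff_has_vector_derivative)

lemma vd_snd: "(v has_vector_derivative V) F \<Longrightarrow> ((\<lambda>s. snd (v s)) has_vector_derivative snd V) F"
  by (rule bounded_linear.has_vector_derivative[OF bounded_linear_snd])

lemma vd_snd_real: "(v has_vector_derivative V) F \<Longrightarrow> ((\<lambda>s. snd (v s)) has_real_derivative (snd V :: real)) F"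
  using bounded_linear.has_vector_derivative[OF bounded_linear_snd]
  by (simp add: has_real_derivative_iff_has_vector_derivative)

lemma Gam_nonneg:
  assumes "admissible_params P" "0 \<le> b" "0 < Ntot y" "0 \<le> xEfc y" "0 \<le> xEpc y" "0 \<le> xIfc y"
    "0 \<le> xIpc y" "0 \<le> xH y"
  shows "0 \<le> Gam P b y"
proof -
  have "0 < eEfc P" "0 < eEpc P" "0 < eIfc P" "0 < eIpc P" "0 < eH P"
    using assms(1) unfolding admissible_params_def by auto
  thus ?thesis unfolding Gam_def using assms
    by (intro mult_nonneg_nonneg divide_nonneg_pos add_nonneg_nonneg) auto
qed

lemma Gam_le:
  assumes "admissible_params P" "0 \<le> b" "b \<le> 1" "0 < Ntot y" "0 \<le> xS y" "0 \<le> xEfc y" "0 \<le> xEpc y" "0 \<le> xIfc y"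
    "0 \<le> xIpc y" "0 \<le> xH y" "0 \<le> xR y"
  shows "Gam P b y \<le> eEfc P + eEpc P + eIfc P + eIpc P + eH P"
proof -
  define es where "es = eEfc P + eEpc P + eIfc P + eIpc P + eH P"
  define Q where "Q = eEfc P * xEfc y + eEpc P * xEpc y + eIfc P * xIfc y + eIpc P * xIpc y + eH P * xH y"
  have e: "0 < eEfc P" "0 < eEpc P" "0 < eIfc P" "0 < eIpc P" "0 < eH P"
    using assms(1) unfolding admissible_params_def by auto
  have "eEfc P * xEfc y \<le> es * xEfc y" "eEpc P * xEpc y \<le> es * xEpc y" "eIfc P * xIfc y \<le> es * xIfc y"
    "eIpc P * xIpc y \<le> es * xIpc y" "eH P * xH y \<le> es * xH y"
    using e assms by (auto intro!: mult_right_mono simp: es_def)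
  hence "Q \<le> es * (xEfc y + xEpc y + xIfc y + xIpc y + xH y)" unfolding Q_def by (simp add: algebra_simps)
  also have "\<dots> \<le> es * Ntot y" using e assms unfolding Ntot_def es_def by (intro mult_left_mono) auto
  finally have "Q / Ntot y \<le> es" using assms(4) by (simp add: pos_divide_le_eq)
  moreover have "0 \<le> Q / Ntot y" unfolding Q_def using e assms by (intro divide_nonneg_pos add_nonneg_nonneg) auto
  moreover have "Gam P b y = b * (Q / Ntot y)" unfolding Gam_def Q_def by simp
  moreover have "b * (Q / Ntot y) \<le> 1 * (Q / Ntot y)"
    by (rule mult_right_mono) (use assms(3) \<open>0 \<le> Q / Ntot y\<close> in auto)
  ultimately show ?thesis by (simp add: es_def)
qed

lemma fS_lower:
  assumes "admissible_params P" "0 \<le> b" "b \<le> 1" "0 < Ntot y" "0 \<le> xS y" "0 \<le> xEfc y" "0 \<le> xEpc y" "0 \<le> xIfc y"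
    "0 \<le> xIpc y" "0 \<le> xH y" "0 \<le> xR y"
  shows "- ((eEfc P + eEpc P + eIfc P + eIpc P + eH P) + mu P) * xS y \<le> fS P \<theta> t b y"
proof -
  have "Gam P b y * xS y \<le> (eEfc P + eEpc P + eIfc P + eIpc P + eH P) * xS y"
    using Gam_le[OF assms] assms(5) by (rule mult_right_mono)
  moreover have "0 \<le> pS P t" using nonneg_p[OF assms(1)] by simp
  ultimately show ?thesis unfolding fS_def by (simp add: algebra_simps)
qed

lemma fields_qp:
  assumes adm: "admissible_params P" and b: "0 \<le> b" and th: "0 \<le> \<theta> t" "\<theta> t \<le> 1" and N: "0 < Ntot y"
    and nn: "0 \<le> xS y" "0 \<le> xEfc y" "0 \<le> xEpc y" "0 \<le> xIfc y" "0 \<le> xIpc y" "0 \<le> xH y" "0 \<le> xR y"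
  shows "xEfc y = 0 \<Longrightarrow> 0 \<le> fEfc P \<theta> t b y" and "xEpc y = 0 \<Longrightarrow> 0 \<le> fEpc P \<theta> t b y"
    and "xIfc y = 0 \<Longrightarrow> 0 \<le> fIfc P \<theta> t b y" and "xIpc y = 0 \<Longrightarrow> 0 \<le> fIpc P \<theta> t b y"
    and "xH y = 0 \<Longrightarrow> 0 \<le> fH P \<theta> t b y" and "xR y = 0 \<Longrightarrow> 0 \<le> fR P \<theta> t b y"
proof -
  have G: "0 \<le> Gam P b y" using Gam_nonneg[OF adm b N] nn by auto
  have p: "0 \<le> pEfc P t" "0 \<le> pEpc P t" "0 \<le> pIfc P t" "0 \<le> pIpc P t" "0 \<le> pH P t" "0 \<le> pR P t"
    using nonneg_p[OF adm] by auto
  have c: "0 < gfc P" "0 < gpc P" "0 < gplus P" "0 < gminus P" "0 < delta P" "0 < sigE P" "0 < sigI P" "0 < sigH P"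
    using adm unfolding admissible_params_def by auto
  show "xEfc y = 0 \<Longrightarrow> 0 \<le> fEfc P \<theta> t b y" unfolding fEfc_def using G p th nn
    by (simp add: add_nonneg_nonneg mult_nonneg_nonneg)
  show "xEpc y = 0 \<Longrightarrow> 0 \<le> fEpc P \<theta> t b y" unfolding fEpc_def using G p th nn
    by (simp add: add_nonneg_nonneg mult_nonneg_nonneg)
  show "xIfc y = 0 \<Longrightarrow> 0 \<le> fIfc P \<theta> t b y" unfolding fIfc_def using p c nn
    by (simp add: add_nonneg_nonneg mult_nonneg_nonneg)
  show "xIpc y = 0 \<Longrightarrow> 0 \<le> fIpc P \<theta> t b y" unfolding fIpc_def using p c nn
    by (simp add: add_nonneg_nonneg mult_nonneg_nonneg)
  show "xH y = 0 \<Longrightarrow> 0 \<le> fH P \<theta> t b y" unfolding fH_def using p c nn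
    by (simp add: add_nonneg_nonneg mult_nonneg_nonneg)
  show "xR y = 0 \<Longrightarrow> 0 \<le> fR P \<theta> t b y" unfolding fR_def using p c nn
    by (simp add: add_nonneg_nonneg mult_nonneg_nonneg)
qed

lemma cont_fields:
  assumes adm: "admissible_params P" and th: "continuous_on S \<theta>" and bb: "continuous_on S bb"
    and c: "continuous_on S (\<lambda>t. xS (y t))" "continuous_on S (\<lambda>t. xEfc (y t))" "continuous_on S (\<lambda>t. xEpc (y t))"
      "continuous_on S (\<lambda>t. xIfc (y t))" "continuous_on S (\<lambda>t. xIpc (y t))" "continuous_on S (\<lambda>t. xH (y t))"
      "continuous_on S (\<lambda>t. xR (y t))"
    and N: "\<forall>t\<in>S. Ntot (y t) \<noteq> 0"
  shows "continuous_on S (\<lambda>t. fS P \<theta> t (bb t) (y t))" "continuous_on S (\<lambda>t. fEfc P \<theta> t (bb t) (y t))"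
    "continuous_on S (\<lambda>t. fEpc P \<theta> t (bb t) (y t))" "continuous_on S (\<lambda>t. fIfc P \<theta> t (bb t) (y t))"
    "continuous_on S (\<lambda>t. fIpc P \<theta> t (bb t) (y t))" "continuous_on S (\<lambda>t. fH P \<theta> t (bb t) (y t))"
    "continuous_on S (\<lambda>t. fR P \<theta> t (bb t) (y t))"
proof -
  have cN: "continuous_on S (\<lambda>t. Ntot (y t))" unfolding Ntot_def by (intro continuous_intros c)
  have cp: "continuous_on S (pS P)" "continuous_on S (pEfc P)" "continuous_on S (pEpc P)" "continuous_on S (pIfc P)"
    "continuous_on S (pIpc P)" "continuous_on S (pH P)" "continuous_on S (pR P)"
    using cont_p[OF adm] by auto
  show "continuous_on S (\<lambda>t. fS P \<theta> t (bb t) (y t))" "continuous_on S (\<lambda>t. fEfc P \<theta> t (bb t) (y t))"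
    "continuous_on S (\<lambda>t. fEpc P \<theta> t (bb t) (y t))" "continuous_on S (\<lambda>t. fIfc P \<theta> t (bb t) (y t))"
    "continuous_on S (\<lambda>t. fIpc P \<theta> t (bb t) (y t))" "continuous_on S (\<lambda>t. fH P \<theta> t (bb t) (y t))"
    "continuous_on S (\<lambda>t. fR P \<theta> t (bb t) (y t))"
    unfolding fdefs Gam_def by (intro continuous_intros cN cp c th bb N)+
qed



lemma sdist2_zero: "sdist2 a b = 0 \<Longrightarrow> a = b"
  unfolding sdist2_def
  by (intro state.equality) (auto simp: add_nonneg_eq_0_iff)

lemma sdist2_nonneg: "0 \<le> sdist2 a b" unfolding sdist2_def by simp

lemma sq_deriv:
  assumes "(f has_real_derivative a) (at t within S)" "(g has_real_derivative b) (at t within S)"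
  shows "((\<lambda>s. (f s - g s)^2) has_real_derivative 2*(f t - g t)*(a - b)) (at t within S)"
proof -
  have d: "((\<lambda>s. f s - g s) has_real_derivative a - b) (at t within S)" by (rule DERIV_diff[OF assms])
  have "((\<lambda>s. (f s - g s) * (f s - g s)) has_real_derivative (a - b) * (f t - g t) + (a - b) * (f t - g t)) (at t within S)"
    by (rule DERIV_mult[OF d d])
  thus ?thesis by (simp add: power2_eq_square algebra_simps)
qed

lemma sdist2_deriv:
  assumes "((\<lambda>s. xS (x s)) has_real_derivative a1) (at t within S)" "((\<lambda>s. xEfc (x s)) has_real_derivative a2) (at t within S)"
    "((\<lambda>s. xEpc (x s)) has_real_derivative a3) (at t within S)" "((\<lambda>s. xIfc (x s)) has_real_derivative a4) (at t within S)"
    "((\<lambda>s. xIpc (x s)) has_real_derivative a5) (at t within S)" "((\<lambda>s. xH (x s)) has_real_derivative a6) (at t within S)"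
    "((\<lambda>s. xR (x s)) has_real_derivative a7) (at t within S)"
    "((\<lambda>s. xS (z s)) has_real_derivative b1) (at t within S)" "((\<lambda>s. xEfc (z s)) has_real_derivative b2) (at t within S)"
    "((\<lambda>s. xEpc (z s)) has_real_derivative b3) (at t within S)" "((\<lambda>s. xIfc (z s)) has_real_derivative b4) (at t within S)"
    "((\<lambda>s. xIpc (z s)) has_real_derivative b5) (at t within S)" "((\<lambda>s. xH (z s)) has_real_derivative b6) (at t within S)"
    "((\<lambda>s. xR (z s)) has_real_derivative b7) (at t within S)"
  shows "((\<lambda>s. sdist2 (x s) (z s)) has_real_derivative
     (2*(xS (x t) - xS (z t))*(a1 - b1) + 2*(xEfc (x t) - xEfc (z t))*(a2 - b2)
    + 2*(xEpc (x t) - xEpc (z t))*(a3 - b3) + 2*(xIfc (x t) - xIfc (z t))*(a4 - b4)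
    + 2*(xIpc (x t) - xIpc (z t))*(a5 - b5) + 2*(xH (x t) - xH (z t))*(a6 - b6)
    + 2*(xR (x t) - xR (z t))*(a7 - b7))) (at t within S)"
  unfolding sdist2_def
  by (intro DERIV_add sq_deriv[OF assms(1) assms(8)] sq_deriv[OF assms(2) assms(9)] sq_deriv[OF assms(3) assms(10)]
      sq_deriv[OF assms(4) assms(11)] sq_deriv[OF assms(5) assms(12)] sq_deriv[OF assms(6) assms(13)]
      sq_deriv[OF assms(7) assms(14)])

lemma (in setting) lipc_use:
  assumes "lipc f L" "t \<in> {0..T}" "b \<in> {0..1}" "z \<in> Rg m K" "w \<in> Rg m K"
  shows "\<bar>f t b z - f t b w\<bar> \<le> L * ddist z w"
proof -
  have "\<bar>f t b z - f t b w\<bar> \<le> L * (ddist z w + \<bar>b - b\<bar>)"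
    by (rule assms(1)[unfolded lipc_def, rule_format, OF assms(2) assms(3) assms(3) assms(4) assms(5)])
  thus ?thesis by simp
qed

locale main =
  fixes P :: params and T blo bhi :: real and \<theta> :: "real \<Rightarrow> real" and x0 :: state
  assumes adm: "admissible_params P"
    and blo: "0 < blo" and blh: "blo \<le> bhi" and bh1: "bhi \<le> 1"
    and T: "0 < T"
    and thc: "continuous_on {0..T} \<theta>" and thb: "\<forall>t\<in>{0..T}. 0 \<le> \<theta> t \<and> \<theta> t \<le> 1"
    and S0: "0 < xS x0" and E10: "0 \<le> xEfc x0" and E20: "0 \<le> xEpc x0" and I10: "0 \<le> xIfc x0"
    and I20: "0 \<le> xIpc x0" and H0: "0 \<le> xH x0" and R0: "0 \<le> xR x0"
begin

definition admb :: "(real \<Rightarrow> real) \<Rightarrow> bool" where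
  "admb \<beta> \<longleftrightarrow> continuous_on {0..T} \<beta> \<and> (\<forall>t\<in>{0..T}. blo \<le> \<beta> t \<and> \<beta> t \<le> bhi)"

definition es where "es = eEfc P + eEpc P + eIfc P + eIpc P + eH P"
definition lamS where "lamS = es + mu P"
definition n1 where "n1 = xS x0 * exp (- (lamS * T))"
definition pA where "pA = (SOME A. \<forall>t. \<bar>pS P t\<bar> \<le> A \<and> \<bar>pEfc P t\<bar> \<le> A \<and> \<bar>pEpc P t\<bar> \<le> A \<and> \<bar>pIfc P t\<bar> \<le> A
     \<and> \<bar>pIpc P t\<bar> \<le> A \<and> \<bar>pH P t\<bar> \<le> A \<and> \<bar>pR P t\<bar> \<le> A)"
definition K0 where "K0 = max (Ntot x0) (7 * pA / mu P)"
definition good where "good y \<longleftrightarrow> n1 \<le> xS y \<and> 0 \<le> xEfc y \<and> 0 \<le> xEpc y \<and> 0 \<le> xIfc y \<and> 0 \<le> xIpc y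
   \<and> 0 \<le> xH y \<and> 0 \<le> xR y \<and> Ntot y \<le> K0"
definition Cst where "Cst z = \<lparr>xS = cl n1 K0 (xS z), xEfc = cl 0 K0 (xEfc z), xEpc = cl 0 K0 (xEpc z),
   xIfc = cl 0 K0 (xIfc z), xIpc = cl 0 K0 (xIpc z), xH = cl 0 K0 (xH z), xR = cl 0 K0 (xR z)\<rparr>"
definition Fc :: "(real \<Rightarrow> real) \<Rightarrow> real \<Rightarrow> t7 \<Rightarrow> t7" where
  "Fc \<beta> t v = (fS P \<theta> t (\<beta> t) (Cst (st v)), fEfc P \<theta> t (\<beta> t) (Cst (st v)), fEpc P \<theta> t (\<beta> t) (Cst (st v)),
     fIfc P \<theta> t (\<beta> t) (Cst (st v)), fIpc P \<theta> t (\<beta> t) (Cst (st v)), fH P \<theta> t (\<beta> t) (Cst (st v)),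
     fR P \<theta> t (\<beta> t) (Cst (st v)))"

lemma mu: "0 < mu P" using adm unfolding admissible_params_def by auto
lemma es: "0 < es" using adm unfolding admissible_params_def es_def by auto
lemma lamS: "0 < lamS" using es mu by (simp add: lamS_def)

lemma pA: "\<forall>t. \<bar>pS P t\<bar> \<le> pA \<and> \<bar>pEfc P t\<bar> \<le> pA \<and> \<bar>pEpc P t\<bar> \<le> pA \<and> \<bar>pIfc P t\<bar> \<le> pA
     \<and> \<bar>pIpc P t\<bar> \<le> pA \<and> \<bar>pH P t\<bar> \<le> pA \<and> \<bar>pR P t\<bar> \<le> pA"
  unfolding pA_def by (rule someI_ex[OF bounded_p[OF adm]])

lemma psum: "pS P t + pEfc P t + pEpc P t + pIfc P t + pIpc P t + pH P t + pR P t \<le> 7 * pA"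
  using pA[rule_format, of t] by (smt (verit))

lemma n1_pos: "0 < n1" using S0 by (simp add: n1_def)

lemma n1_le: assumes "t \<le> T" shows "n1 \<le> xS x0 * exp (- (lamS * t))"
proof -
  have "- (lamS * T) \<le> - (lamS * t)" using assms lamS by (simp add: mult_left_mono)
  thus ?thesis unfolding n1_def using S0 by (intro mult_left_mono) auto
qed

lemma n1_S0: "n1 \<le> xS x0"
  using n1_le[of 0] T by simp

lemma S0N: "xS x0 \<le> Ntot x0" using E10 E20 I10 I20 H0 R0 by (simp add: Ntot_def)

lemma K0: "Ntot x0 \<le> K0" "n1 \<le> K0" "0 < K0" "7 * pA \<le> mu P * K0"
proof -
  show "Ntot x0 \<le> K0" by (simp add: K0_def)
  thus "n1 \<le> K0" using n1_S0 S0N by linarith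
  thus "0 < K0" using n1_pos by linarith
  have "7 * pA / mu P \<le> K0" by (simp add: K0_def)
  thus "7 * pA \<le> mu P * K0" using mu by (simp add: pos_divide_le_eq mult.commute)
qed

lemma setting_inst: "setting P \<theta> T (n1/2)"
  by unfold_locales (use adm thb n1_pos in auto)

lemma good_Rg:
  assumes "good y" shows "y \<in> Rg (n1/2) (K0+1)"
  using assms n1_pos unfolding good_def Rg_def Ntot_def mem_Collect_eq by (auto simp: abs_le_iff)

lemma good_N: "good y \<Longrightarrow> n1 \<le> Ntot y"
  unfolding good_def Ntot_def by linarith

lemma Cst_simps[simp]: "xS (Cst z) = cl n1 K0 (xS z)" "xEfc (Cst z) = cl 0 K0 (xEfc z)" "xEpc (Cst z) = cl 0 K0 (xEpc z)"
  "xIfc (Cst z) = cl 0 K0 (xIfc z)" "xIpc (Cst z) = cl 0 K0 (xIpc z)" "xH (Cst z) = cl 0 K0 (xH z)"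
  "xR (Cst z) = cl 0 K0 (xR z)"
  by (simp_all add: Cst_def)

lemma cl_bounds: "lo \<le> hi \<Longrightarrow> lo \<le> cl lo hi v \<and> cl lo hi v \<le> hi" by (simp add: cl_def)
lemma cl_id: "lo \<le> v \<Longrightarrow> v \<le> hi \<Longrightarrow> cl lo hi v = v" by (simp add: cl_def)

lemma Cst_props:
  "n1 \<le> xS (Cst z)" "0 \<le> xEfc (Cst z)" "0 \<le> xEpc (Cst z)" "0 \<le> xIfc (Cst z)" "0 \<le> xIpc (Cst z)"
  "0 \<le> xH (Cst z)" "0 \<le> xR (Cst z)" "n1 \<le> Ntot (Cst z)" "0 < Ntot (Cst z)"
  "xS (Cst z) \<le> K0" "xEfc (Cst z) \<le> K0" "xEpc (Cst z) \<le> K0" "xIfc (Cst z) \<le> K0" "xIpc (Cst z) \<le> K0"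
  "xH (Cst z) \<le> K0" "xR (Cst z) \<le> K0"
proof -
  have a: "n1 \<le> cl n1 K0 v \<and> cl n1 K0 v \<le> K0" "0 \<le> cl 0 K0 v \<and> cl 0 K0 v \<le> K0" for v
    using cl_bounds K0 by auto
  show "n1 \<le> xS (Cst z)" "0 \<le> xEfc (Cst z)" "0 \<le> xEpc (Cst z)" "0 \<le> xIfc (Cst z)" "0 \<le> xIpc (Cst z)"
    "0 \<le> xH (Cst z)" "0 \<le> xR (Cst z)"
    "xS (Cst z) \<le> K0" "xEfc (Cst z) \<le> K0" "xEpc (Cst z) \<le> K0" "xIfc (Cst z) \<le> K0" "xIpc (Cst z) \<le> K0"
    "xH (Cst z) \<le> K0" "xR (Cst z) \<le> K0" using a by auto
  thus "n1 \<le> Ntot (Cst z)" unfolding Ntot_def by linarith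
  thus "0 < Ntot (Cst z)" using n1_pos by linarith
qed

lemma Cst_Rg: "Cst z \<in> Rg (n1/2) (K0+1)"
  using Cst_props[of z] n1_pos K0 unfolding Rg_def mem_Collect_eq by (auto simp: abs_le_iff)

lemma Cst_id: assumes "good y" shows "Cst y = y"
proof -
  have g: "n1 \<le> xS y" "0 \<le> xEfc y" "0 \<le> xEpc y" "0 \<le> xIfc y" "0 \<le> xIpc y" "0 \<le> xH y" "0 \<le> xR y" "Ntot y \<le> K0"
    using assms unfolding good_def by auto
  hence "xS y \<le> K0" "xEfc y \<le> K0" "xEpc y \<le> K0" "xIfc y \<le> K0" "xIpc y \<le> K0" "xH y \<le> K0" "xR y \<le> K0"
    using n1_pos unfolding Ntot_def by linarith+
  thus ?thesis using g by (intro state.equality) (simp_all add: cl_id)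
qed

lemma ddist_Cst: "ddist (Cst z) (Cst w) \<le> ddist z w"
  unfolding ddist_def Cst_simps
  using cl_lip[of n1 K0 "xS z" "xS w"] cl_lip[of 0 K0 "xEfc z" "xEfc w"] cl_lip[of 0 K0 "xEpc z" "xEpc w"]
    cl_lip[of 0 K0 "xIfc z" "xIfc w"] cl_lip[of 0 K0 "xIpc z" "xIpc w"] cl_lip[of 0 K0 "xH z" "xH w"]
    cl_lip[of 0 K0 "xR z" "xR w"] by linarith

lemma admb_b:
  assumes "admb \<beta>" "t \<in> {0..T}"
  shows "0 \<le> \<beta> t \<and> \<beta> t \<le> 1 \<and> \<beta> t \<in> {0..1}"
proof -
  have "blo \<le> \<beta> t" "\<beta> t \<le> bhi" using assms unfolding admb_def by auto
  thus ?thesis using blo bh1 by auto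
qed

lemma Fc_lip:
  assumes ab: "admb \<beta>"
  shows "\<exists>L\<ge>0. \<forall>t\<in>{0..T}. \<forall>v w. norm (Fc \<beta> t v - Fc \<beta> t w) \<le> L * norm (v - w)"
proof -
  obtain L where L: "L \<ge> 0" and l:
    "setting.lipc T (n1/2) (K0+1) (\<lambda>t b z. fS P \<theta> t b z) L \<and> setting.lipc T (n1/2) (K0+1) (\<lambda>t b z. fEfc P \<theta> t b z) L
     \<and> setting.lipc T (n1/2) (K0+1) (\<lambda>t b z. fEpc P \<theta> t b z) L \<and> setting.lipc T (n1/2) (K0+1) (\<lambda>t b z. fIfc P \<theta> t b z) L
     \<and> setting.lipc T (n1/2) (K0+1) (\<lambda>t b z. fIpc P \<theta> t b z) L \<and> setting.lipc T (n1/2) (K0+1) (\<lambda>t b z. fH P \<theta> t b z) L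
     \<and> setting.lipc T (n1/2) (K0+1) (\<lambda>t b z. fR P \<theta> t b z) L"
    using setting.fields_lipc[OF setting_inst] by blast
  have l1: "setting.lipc T (n1/2) (K0+1) (\<lambda>t b z. fS P \<theta> t b z) L"
    and l2: "setting.lipc T (n1/2) (K0+1) (\<lambda>t b z. fEfc P \<theta> t b z) L"
    and l3: "setting.lipc T (n1/2) (K0+1) (\<lambda>t b z. fEpc P \<theta> t b z) L"
    and l4: "setting.lipc T (n1/2) (K0+1) (\<lambda>t b z. fIfc P \<theta> t b z) L"
    and l5: "setting.lipc T (n1/2) (K0+1) (\<lambda>t b z. fIpc P \<theta> t b z) L"
    and l6: "setting.lipc T (n1/2) (K0+1) (\<lambda>t b z. fH P \<theta> t b z) L"
    and l7: "setting.lipc T (n1/2) (K0+1) (\<lambda>t b z. fR P \<theta> t b z) L" using l by auto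
  show ?thesis
  proof (intro exI[of _ "49 * L"] conjI allI ballI)
    fix t v w assume t: "t \<in> {0..T}"
    define z where "z = Cst (st v)"
    define z' where "z' = Cst (st w)"
    have b: "\<beta> t \<in> {0..1}" using admb_b[OF ab t] by auto
    have zR: "z \<in> Rg (n1/2) (K0+1)" "z' \<in> Rg (n1/2) (K0+1)" unfolding z_def z'_def by (rule Cst_Rg)+
    have d: "\<bar>fS P \<theta> t (\<beta> t) z - fS P \<theta> t (\<beta> t) z'\<bar> \<le> L * ddist z z'"
      "\<bar>fEfc P \<theta> t (\<beta> t) z - fEfc P \<theta> t (\<beta> t) z'\<bar> \<le> L * ddist z z'"
      "\<bar>fEpc P \<theta> t (\<beta> t) z - fEpc P \<theta> t (\<beta> t) z'\<bar> \<le> L * ddist z z'"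
      "\<bar>fIfc P \<theta> t (\<beta> t) z - fIfc P \<theta> t (\<beta> t) z'\<bar> \<le> L * ddist z z'"
      "\<bar>fIpc P \<theta> t (\<beta> t) z - fIpc P \<theta> t (\<beta> t) z'\<bar> \<le> L * ddist z z'"
      "\<bar>fH P \<theta> t (\<beta> t) z - fH P \<theta> t (\<beta> t) z'\<bar> \<le> L * ddist z z'"
      "\<bar>fR P \<theta> t (\<beta> t) z - fR P \<theta> t (\<beta> t) z'\<bar> \<le> L * ddist z z'"
      using setting.lipc_use[OF setting_inst l1 t b zR] setting.lipc_use[OF setting_inst l2 t b zR]
        setting.lipc_use[OF setting_inst l3 t b zR] setting.lipc_use[OF setting_inst l4 t b zR]
        setting.lipc_use[OF setting_inst l5 t b zR] setting.lipc_use[OF setting_inst l6 t b zR]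
        setting.lipc_use[OF setting_inst l7 t b zR] by auto
    have "norm (Fc \<beta> t v - Fc \<beta> t w) \<le>
       \<bar>fS P \<theta> t (\<beta> t) z - fS P \<theta> t (\<beta> t) z'\<bar> + \<bar>fEfc P \<theta> t (\<beta> t) z - fEfc P \<theta> t (\<beta> t) z'\<bar>
       + \<bar>fEpc P \<theta> t (\<beta> t) z - fEpc P \<theta> t (\<beta> t) z'\<bar> + \<bar>fIfc P \<theta> t (\<beta> t) z - fIfc P \<theta> t (\<beta> t) z'\<bar>
       + \<bar>fIpc P \<theta> t (\<beta> t) z - fIpc P \<theta> t (\<beta> t) z'\<bar> + \<bar>fH P \<theta> t (\<beta> t) z - fH P \<theta> t (\<beta> t) z'\<bar>
       + \<bar>fR P \<theta> t (\<beta> t) z - fR P \<theta> t (\<beta> t) z'\<bar>"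
      unfolding Fc_def z_def z'_def diff_Pair by (rule norm7)
    also have "\<dots> \<le> 7 * (L * ddist z z')" using d by linarith
    also have "\<dots> \<le> 7 * (L * ddist (st v) (st w))"
      unfolding z_def z'_def using L ddist_Cst by (intro mult_left_mono) auto
    also have "\<dots> \<le> 7 * (L * (7 * norm (v - w)))"
      using L ddist_st by (intro mult_left_mono) auto
    finally show "norm (Fc \<beta> t v - Fc \<beta> t w) \<le> 49 * L * norm (v - w)" by simp
  qed (use L in simp)
qed

lemma cont_cl: "continuous_on S f \<Longrightarrow> continuous_on S (\<lambda>t. cl lo hi (f t))"
  unfolding cl_def by (intro continuous_on_max continuous_on_min continuous_on_const)

lemma cont_Fc:
  assumes ab: "admb \<beta>" and v: "continuous_on {0..T} v"
  shows "continuous_on {0..T} (\<lambda>t. Fc \<beta> t (v t))"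
proof -
  have bc: "continuous_on {0..T} \<beta>" using ab unfolding admb_def by auto
  note s1 = continuous_on_snd[OF v]
  note s2 = continuous_on_snd[OF s1]
  note s3 = continuous_on_snd[OF s2]
  note s4 = continuous_on_snd[OF s3]
  note s5 = continuous_on_snd[OF s4]
  note s6 = continuous_on_snd[OF s5]
  have cy: "continuous_on {0..T} (\<lambda>t. xS (Cst (st (v t))))" "continuous_on {0..T} (\<lambda>t. xEfc (Cst (st (v t))))"
    "continuous_on {0..T} (\<lambda>t. xEpc (Cst (st (v t))))" "continuous_on {0..T} (\<lambda>t. xIfc (Cst (st (v t))))"
    "continuous_on {0..T} (\<lambda>t. xIpc (Cst (st (v t))))" "continuous_on {0..T} (\<lambda>t. xH (Cst (st (v t))))"
    "continuous_on {0..T} (\<lambda>t. xR (Cst (st (v t))))"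
    unfolding Cst_simps st_def state.simps
    by (rule cont_cl, rule continuous_on_fst[OF v] continuous_on_fst[OF s1] continuous_on_fst[OF s2]
       continuous_on_fst[OF s3] continuous_on_fst[OF s4] continuous_on_fst[OF s5] s6)+
  have N: "\<forall>t\<in>{0..T}. Ntot (Cst (st (v t))) \<noteq> 0"
  proof
    fix t show "Ntot (Cst (st (v t))) \<noteq> 0" using Cst_props(9)[of "st (v t)"] by auto
  qed
  note cf = cont_fields[OF adm thc bc cy N]
  show ?thesis unfolding Fc_def
    by (intro continuous_on_Pair cf(1) cf(2) cf(3) cf(4) cf(5) cf(6) cf(7))
qed

end



lemma sol_D:
  assumes "is_solution P T \<theta> \<beta> x0 x" "t \<in> {0..T}"
  shows "x 0 = x0"
    "((\<lambda>s. xS (x s)) has_real_derivative fS P \<theta> t (\<beta> t) (x t)) (at t within {0..T})"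
    "((\<lambda>s. xEfc (x s)) has_real_derivative fEfc P \<theta> t (\<beta> t) (x t)) (at t within {0..T})"
    "((\<lambda>s. xEpc (x s)) has_real_derivative fEpc P \<theta> t (\<beta> t) (x t)) (at t within {0..T})"
    "((\<lambda>s. xIfc (x s)) has_real_derivative fIfc P \<theta> t (\<beta> t) (x t)) (at t within {0..T})"
    "((\<lambda>s. xIpc (x s)) has_real_derivative fIpc P \<theta> t (\<beta> t) (x t)) (at t within {0..T})"
    "((\<lambda>s. xH (x s)) has_real_derivative fH P \<theta> t (\<beta> t) (x t)) (at t within {0..T})"
    "((\<lambda>s. xR (x s)) has_real_derivative fR P \<theta> t (\<beta> t) (x t)) (at t within {0..T})"
  using assms unfolding sol_iff by simp_all

lemma (in setting) lipc_use2:
  assumes "lipc f L" "t \<in> {0..T}" "b1 \<in> {0..1}" "b2 \<in> {0..1}" "z \<in> Rg m K" "w \<in> Rg m K"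
  shows "\<bar>f t b1 z - f t b2 w\<bar> \<le> L * (ddist z w + \<bar>b1 - b2\<bar>)"
  by (rule assms(1)[unfolded lipc_def, rule_format, OF assms(2-6)])

context main begin

definition dsum :: "real \<Rightarrow> real \<Rightarrow> real \<Rightarrow> state \<Rightarrow> state \<Rightarrow> real" where
  "dsum t b1 b2 a w =
      2*(xS a - xS w)*(fS P \<theta> t b1 a - fS P \<theta> t b2 w) + 2*(xEfc a - xEfc w)*(fEfc P \<theta> t b1 a - fEfc P \<theta> t b2 w)
    + 2*(xEpc a - xEpc w)*(fEpc P \<theta> t b1 a - fEpc P \<theta> t b2 w) + 2*(xIfc a - xIfc w)*(fIfc P \<theta> t b1 a - fIfc P \<theta> t b2 w)
    + 2*(xIpc a - xIpc w)*(fIpc P \<theta> t b1 a - fIpc P \<theta> t b2 w) + 2*(xH a - xH w)*(fH P \<theta> t b1 a - fH P \<theta> t b2 w)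
    + 2*(xR a - xR w)*(fR P \<theta> t b1 a - fR P \<theta> t b2 w)"

lemma u_deriv:
  assumes "is_solution P T \<theta> \<beta> x0 x" "is_solution P T \<theta> \<beta>' x0 z" "t \<in> {0..T}"
  shows "((\<lambda>s. sdist2 (x s) (z s)) has_real_derivative dsum t (\<beta> t) (\<beta>' t) (x t) (z t)) (at t within {0..T})"
proof -
  note a = sol_D[OF assms(1,3)] and b = sol_D[OF assms(2,3)]
  show ?thesis unfolding dsum_def
    by (rule sdist2_deriv[OF a(2) a(3) a(4) a(5) a(6) a(7) a(8) b(2) b(3) b(4) b(5) b(6) b(7) b(8)])
qed

lemma dbound:
  "\<exists>L\<ge>0. \<forall>t b1 b2 a w. t \<in> {0..T} \<longrightarrow> b1 \<in> {0..1} \<longrightarrow> b2 \<in> {0..1} \<longrightarrow> a \<in> Rg (n1/2) (K0+1)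
      \<longrightarrow> w \<in> Rg (n1/2) (K0+1) \<longrightarrow> dsum t b1 b2 a w \<le> 21 * L * sdist2 a w + L * (b1 - b2)^2"
proof -
  obtain L where L: "L \<ge> 0" and l:
    "setting.lipc T (n1/2) (K0+1) (\<lambda>t b z. fS P \<theta> t b z) L \<and> setting.lipc T (n1/2) (K0+1) (\<lambda>t b z. fEfc P \<theta> t b z) L
     \<and> setting.lipc T (n1/2) (K0+1) (\<lambda>t b z. fEpc P \<theta> t b z) L \<and> setting.lipc T (n1/2) (K0+1) (\<lambda>t b z. fIfc P \<theta> t b z) L
     \<and> setting.lipc T (n1/2) (K0+1) (\<lambda>t b z. fIpc P \<theta> t b z) L \<and> setting.lipc T (n1/2) (K0+1) (\<lambda>t b z. fH P \<theta> t b z) L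
     \<and> setting.lipc T (n1/2) (K0+1) (\<lambda>t b z. fR P \<theta> t b z) L"
    using setting.fields_lipc[OF setting_inst] by blast
  have l1: "setting.lipc T (n1/2) (K0+1) (\<lambda>t b z. fS P \<theta> t b z) L"
    and l2: "setting.lipc T (n1/2) (K0+1) (\<lambda>t b z. fEfc P \<theta> t b z) L"
    and l3: "setting.lipc T (n1/2) (K0+1) (\<lambda>t b z. fEpc P \<theta> t b z) L"
    and l4: "setting.lipc T (n1/2) (K0+1) (\<lambda>t b z. fIfc P \<theta> t b z) L"
    and l5: "setting.lipc T (n1/2) (K0+1) (\<lambda>t b z. fIpc P \<theta> t b z) L"
    and l6: "setting.lipc T (n1/2) (K0+1) (\<lambda>t b z. fH P \<theta> t b z) L"
    and l7: "setting.lipc T (n1/2) (K0+1) (\<lambda>t b z. fR P \<theta> t b z) L" using l by auto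
  show ?thesis
  proof (intro exI[of _ L] conjI allI impI)
    fix t b1 b2 a w assume h: "t \<in> {0..T}" "b1 \<in> {0..1::real}" "b2 \<in> {0..1::real}"
      "a \<in> Rg (n1/2) (K0+1)" "w \<in> Rg (n1/2) (K0+1)"
    note g1 = setting.lipc_use2[OF setting_inst l1 h]
    note g2 = setting.lipc_use2[OF setting_inst l2 h]
    note g3 = setting.lipc_use2[OF setting_inst l3 h]
    note g4 = setting.lipc_use2[OF setting_inst l4 h]
    note g5 = setting.lipc_use2[OF setting_inst l5 h]
    note g6 = setting.lipc_use2[OF setting_inst l6 h]
    note g7 = setting.lipc_use2[OF setting_inst l7 h]
    have "dsum t b1 b2 a w \<le> 21 * L * sdist2 a w + L * \<bar>b1 - b2\<bar>^2"
      unfolding dsum_def sdist2_def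
      by (rule key_ineq[OF L abs_ge_zero g1[unfolded ddist_def] g2[unfolded ddist_def] g3[unfolded ddist_def]
          g4[unfolded ddist_def] g5[unfolded ddist_def] g6[unfolded ddist_def] g7[unfolded ddist_def]])
    thus "dsum t b1 b2 a w \<le> 21 * L * sdist2 a w + L * (b1 - b2)^2" by simp
  qed (use L in simp)
qed

lemma sq_le_sdist2:
  "(xS a - xS w)^2 \<le> sdist2 a w" "(xEfc a - xEfc w)^2 \<le> sdist2 a w" "(xEpc a - xEpc w)^2 \<le> sdist2 a w"
  "(xIfc a - xIfc w)^2 \<le> sdist2 a w" "(xIpc a - xIpc w)^2 \<le> sdist2 a w" "(xH a - xH w)^2 \<le> sdist2 a w"
  "(xR a - xR w)^2 \<le> sdist2 a w"
proof -
  have "0 \<le> (xS a - xS w)^2" "0 \<le> (xEfc a - xEfc w)^2" "0 \<le> (xEpc a - xEpc w)^2" "0 \<le> (xIfc a - xIfc w)^2"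
    "0 \<le> (xIpc a - xIpc w)^2" "0 \<le> (xH a - xH w)^2" "0 \<le> (xR a - xR w)^2" by simp_all
  thus "(xS a - xS w)^2 \<le> sdist2 a w" "(xEfc a - xEfc w)^2 \<le> sdist2 a w" "(xEpc a - xEpc w)^2 \<le> sdist2 a w"
    "(xIfc a - xIfc w)^2 \<le> sdist2 a w" "(xIpc a - xIpc w)^2 \<le> sdist2 a w" "(xH a - xH w)^2 \<le> sdist2 a w"
    "(xR a - xR w)^2 \<le> sdist2 a w" unfolding sdist2_def by linarith+
qed

lemma abs_lt_of_sq: "(d::real)^2 \<le> u \<Longrightarrow> u < e^2 \<Longrightarrow> 0 \<le> e \<Longrightarrow> -e < d \<and> d < e"
proof -
  assume a: "d^2 \<le> u" "u < e^2" "0 \<le> e"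
  have "\<bar>d\<bar>^2 < e^2" using a by simp
  hence "\<bar>d\<bar> < e" using a(3) by (rule power2_less_imp_less)
  thus ?thesis by linarith
qed

lemma near_good_Rg:
  assumes g: "good a" and u: "sdist2 a w < (min 1 (n1/14))^2"
  shows "w \<in> Rg (n1/2) (K0+1)"
proof -
  define e where "e = min 1 (n1/14)"
  have e: "0 \<le> e" "e \<le> 1" "e \<le> n1/14" using n1_pos by (auto simp: e_def)
  have u': "sdist2 a w < e^2" using u by (simp add: e_def)
  note q = sq_le_sdist2[of a w]
  have d: "-e < xS a - xS w \<and> xS a - xS w < e" "-e < xEfc a - xEfc w \<and> xEfc a - xEfc w < e"
    "-e < xEpc a - xEpc w \<and> xEpc a - xEpc w < e" "-e < xIfc a - xIfc w \<and> xIfc a - xIfc w < e"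
    "-e < xIpc a - xIpc w \<and> xIpc a - xIpc w < e" "-e < xH a - xH w \<and> xH a - xH w < e"
    "-e < xR a - xR w \<and> xR a - xR w < e"
    using abs_lt_of_sq[OF q(1) u' e(1)] abs_lt_of_sq[OF q(2) u' e(1)] abs_lt_of_sq[OF q(3) u' e(1)]
      abs_lt_of_sq[OF q(4) u' e(1)] abs_lt_of_sq[OF q(5) u' e(1)] abs_lt_of_sq[OF q(6) u' e(1)]
      abs_lt_of_sq[OF q(7) u' e(1)] by auto
  have ga: "n1 \<le> xS a" "0 \<le> xEfc a" "0 \<le> xEpc a" "0 \<le> xIfc a" "0 \<le> xIpc a" "0 \<le> xH a" "0 \<le> xR a"
    "xS a + xEfc a + xEpc a + xIfc a + xIpc a + xH a + xR a \<le> K0"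
    using g unfolding good_def Ntot_def by auto
  show ?thesis unfolding Rg_def Ntot_def mem_Collect_eq abs_le_iff
    using d ga e n1_pos by (intro conjI; linarith)
qed

end



context main begin

lemma exist:
  assumes ab: "admb \<beta>"
  shows "\<exists>x. is_solution P T \<theta> \<beta> x0 x \<and> (\<forall>t\<in>{0..T}. good (x t))"
proof -
  have bnd: "0 \<le> \<beta> t" "\<beta> t \<le> 1" if "t \<in> {0..T}" for t using admb_b[OF ab that] by auto
  have th: "0 \<le> \<theta> t" "\<theta> t \<le> 1" if "t \<in> {0..T}" for t using thb that by auto
  obtain L where L: "L \<ge> 0" "\<forall>t\<in>{0..T}. \<forall>v w. norm (Fc \<beta> t v - Fc \<beta> t w) \<le> L * norm (v - w)"
    using Fc_lip[OF ab] by blast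
  have lip: "norm (Fc \<beta> t v - Fc \<beta> t w) \<le> L * norm (v - w)" if "t \<in> {0..T}" for t v w
    by (rule L(2)[rule_format, OF that])
  have T': "0 \<le> T" using T by simp
  obtain v where v0: "v 0 = tp x0" and vd: "\<forall>t\<in>{0..T}. (v has_vector_derivative Fc \<beta> t (v t)) (at t within {0..T})"
    using picard[OF T' L(1) lip cont_Fc[OF ab]] by blast
  define x where "x t = st (v t)" for t
  define y where "y t = Cst (x t)" for t
  have vd': "(v has_vector_derivative Fc \<beta> t (v t)) (at t within {0..T})" if "t \<in> {0..T}" for t
    using vd that by simp
  have dS: "((\<lambda>s. xS (x s)) has_real_derivative fS P \<theta> t (\<beta> t) (y t)) (at t within {0..T})" if t: "t \<in> {0..T}" for t
    using vd_fst[OF vd'[OF t]] by (simp add: x_def y_def st_def Fc_def)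
  have dEfc: "((\<lambda>s. xEfc (x s)) has_real_derivative fEfc P \<theta> t (\<beta> t) (y t)) (at t within {0..T})" if t: "t \<in> {0..T}" for t
    using vd_fst[OF vd_snd[OF vd'[OF t]]] by (simp add: x_def y_def st_def Fc_def)
  have dEpc: "((\<lambda>s. xEpc (x s)) has_real_derivative fEpc P \<theta> t (\<beta> t) (y t)) (at t within {0..T})" if t: "t \<in> {0..T}" for t
    using vd_fst[OF vd_snd[OF vd_snd[OF vd'[OF t]]]] by (simp add: x_def y_def st_def Fc_def)
  have dIfc: "((\<lambda>s. xIfc (x s)) has_real_derivative fIfc P \<theta> t (\<beta> t) (y t)) (at t within {0..T})" if t: "t \<in> {0..T}" for t
    using vd_fst[OF vd_snd[OF vd_snd[OF vd_snd[OF vd'[OF t]]]]] by (simp add: x_def y_def st_def Fc_def)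
  have dIpc: "((\<lambda>s. xIpc (x s)) has_real_derivative fIpc P \<theta> t (\<beta> t) (y t)) (at t within {0..T})" if t: "t \<in> {0..T}" for t
    using vd_fst[OF vd_snd[OF vd_snd[OF vd_snd[OF vd_snd[OF vd'[OF t]]]]]] by (simp add: x_def y_def st_def Fc_def)
  have dH: "((\<lambda>s. xH (x s)) has_real_derivative fH P \<theta> t (\<beta> t) (y t)) (at t within {0..T})" if t: "t \<in> {0..T}" for t
    using vd_fst[OF vd_snd[OF vd_snd[OF vd_snd[OF vd_snd[OF vd_snd[OF vd'[OF t]]]]]]] by (simp add: x_def y_def st_def Fc_def)
  have dR: "((\<lambda>s. xR (x s)) has_real_derivative fR P \<theta> t (\<beta> t) (y t)) (at t within {0..T})" if t: "t \<in> {0..T}" for t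
    using vd_snd_real[OF vd_snd[OF vd_snd[OF vd_snd[OF vd_snd[OF vd_snd[OF vd'[OF t]]]]]]] by (simp add: x_def y_def st_def Fc_def)
  have x00: "x 0 = x0" by (simp add: x_def v0)
  have yp: "0 < Ntot (y t)" "0 \<le> xS (y t)" "0 \<le> xEfc (y t)" "0 \<le> xEpc (y t)" "0 \<le> xIfc (y t)"
     "0 \<le> xIpc (y t)" "0 \<le> xH (y t)" "0 \<le> xR (y t)" "n1 \<le> xS (y t)" for t
    unfolding y_def using Cst_props[of "x t"] n1_pos by linarith+
  have QP: "(xEfc (y t) = 0 \<longrightarrow> 0 \<le> fEfc P \<theta> t (\<beta> t) (y t)) \<and> (xEpc (y t) = 0 \<longrightarrow> 0 \<le> fEpc P \<theta> t (\<beta> t) (y t))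
    \<and> (xIfc (y t) = 0 \<longrightarrow> 0 \<le> fIfc P \<theta> t (\<beta> t) (y t)) \<and> (xIpc (y t) = 0 \<longrightarrow> 0 \<le> fIpc P \<theta> t (\<beta> t) (y t))
    \<and> (xH (y t) = 0 \<longrightarrow> 0 \<le> fH P \<theta> t (\<beta> t) (y t)) \<and> (xR (y t) = 0 \<longrightarrow> 0 \<le> fR P \<theta> t (\<beta> t) (y t))"
    if t: "t \<in> {0..T}" for t
  proof -
    note q = fields_qp[of P "\<beta> t" \<theta> t "y t", OF adm bnd(1)[OF t] th[OF t] yp(1-8)[of t]]
    show ?thesis using q by simp
  qed
  have cl0: "cl 0 K0 a = 0" if "a < 0" for a using that K0 by (simp add: cl_def)
  have T0: "0 \<le> T" using T by simp
  have pEfc: "\<forall>t\<in>{0..T}. 0 \<le> xEfc (x t)"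
  proof (rule positivity[of T "\<lambda>s. xEfc (x s)" "\<lambda>t. fEfc P \<theta> t (\<beta> t) (y t)", OF T0])
    show "\<forall>t\<in>{0..T}. ((\<lambda>s. xEfc (x s)) has_real_derivative fEfc P \<theta> t (\<beta> t) (y t)) (at t within {0..T})"
      using dEfc by simp
    show "0 \<le> xEfc (x 0)" using x00 E10 by simp
    fix t assume t: "t \<in> {0..T}" and n: "xEfc (x t) < 0"
    have "xEfc (y t) = 0" using cl0[OF n] by (simp add: y_def)
    thus "0 \<le> fEfc P \<theta> t (\<beta> t) (y t)" using QP[OF t] by simp
  qed
  have pEpc: "\<forall>t\<in>{0..T}. 0 \<le> xEpc (x t)"
  proof (rule positivity[of T "\<lambda>s. xEpc (x s)" "\<lambda>t. fEpc P \<theta> t (\<beta> t) (y t)", OF T0])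
    show "\<forall>t\<in>{0..T}. ((\<lambda>s. xEpc (x s)) has_real_derivative fEpc P \<theta> t (\<beta> t) (y t)) (at t within {0..T})"
      using dEpc by simp
    show "0 \<le> xEpc (x 0)" using x00 E20 by simp
    fix t assume t: "t \<in> {0..T}" and n: "xEpc (x t) < 0"
    have "xEpc (y t) = 0" using cl0[OF n] by (simp add: y_def)
    thus "0 \<le> fEpc P \<theta> t (\<beta> t) (y t)" using QP[OF t] by simp
  qed
  have pIfc: "\<forall>t\<in>{0..T}. 0 \<le> xIfc (x t)"
  proof (rule positivity[of T "\<lambda>s. xIfc (x s)" "\<lambda>t. fIfc P \<theta> t (\<beta> t) (y t)", OF T0])
    show "\<forall>t\<in>{0..T}. ((\<lambda>s. xIfc (x s)) has_real_derivative fIfc P \<theta> t (\<beta> t) (y t)) (at t within {0..T})"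
      using dIfc by simp
    show "0 \<le> xIfc (x 0)" using x00 I10 by simp
    fix t assume t: "t \<in> {0..T}" and n: "xIfc (x t) < 0"
    have "xIfc (y t) = 0" using cl0[OF n] by (simp add: y_def)
    thus "0 \<le> fIfc P \<theta> t (\<beta> t) (y t)" using QP[OF t] by simp
  qed
  have pIpc: "\<forall>t\<in>{0..T}. 0 \<le> xIpc (x t)"
  proof (rule positivity[of T "\<lambda>s. xIpc (x s)" "\<lambda>t. fIpc P \<theta> t (\<beta> t) (y t)", OF T0])
    show "\<forall>t\<in>{0..T}. ((\<lambda>s. xIpc (x s)) has_real_derivative fIpc P \<theta> t (\<beta> t) (y t)) (at t within {0..T})"
      using dIpc by simp
    show "0 \<le> xIpc (x 0)" using x00 I20 by simp
    fix t assume t: "t \<in> {0..T}" and n: "xIpc (x t) < 0"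
    have "xIpc (y t) = 0" using cl0[OF n] by (simp add: y_def)
    thus "0 \<le> fIpc P \<theta> t (\<beta> t) (y t)" using QP[OF t] by simp
  qed
  have pH: "\<forall>t\<in>{0..T}. 0 \<le> xH (x t)"
  proof (rule positivity[of T "\<lambda>s. xH (x s)" "\<lambda>t. fH P \<theta> t (\<beta> t) (y t)", OF T0])
    show "\<forall>t\<in>{0..T}. ((\<lambda>s. xH (x s)) has_real_derivative fH P \<theta> t (\<beta> t) (y t)) (at t within {0..T})"
      using dH by simp
    show "0 \<le> xH (x 0)" using x00 H0 by simp
    fix t assume t: "t \<in> {0..T}" and n: "xH (x t) < 0"
    have "xH (y t) = 0" using cl0[OF n] by (simp add: y_def)
    thus "0 \<le> fH P \<theta> t (\<beta> t) (y t)" using QP[OF t] by simp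
  qed
  have pR: "\<forall>t\<in>{0..T}. 0 \<le> xR (x t)"
  proof (rule positivity[of T "\<lambda>s. xR (x s)" "\<lambda>t. fR P \<theta> t (\<beta> t) (y t)", OF T0])
    show "\<forall>t\<in>{0..T}. ((\<lambda>s. xR (x s)) has_real_derivative fR P \<theta> t (\<beta> t) (y t)) (at t within {0..T})"
      using dR by simp
    show "0 \<le> xR (x 0)" using x00 R0 by simp
    fix t assume t: "t \<in> {0..T}" and n: "xR (x t) < 0"
    have "xR (y t) = 0" using cl0[OF n] by (simp add: y_def)
    thus "0 \<le> fR P \<theta> t (\<beta> t) (y t)" using QP[OF t] by simp
  qed
  define q where "q t = xS x0 * exp (- (lamS * t))" for t
  have pS: "\<forall>t\<in>{0..T}. 0 \<le> xS (x t) - q t"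
  proof (rule positivity[of T "\<lambda>s. xS (x s) - q s" "\<lambda>t. fS P \<theta> t (\<beta> t) (y t) + lamS * q t", OF T0])
    show "\<forall>t\<in>{0..T}. ((\<lambda>s. xS (x s) - q s) has_real_derivative fS P \<theta> t (\<beta> t) (y t) + lamS * q t) (at t within {0..T})"
    proof
      fix t assume t: "t \<in> {0..T}"
      have e: "((\<lambda>s. exp (- (lamS * s))) has_real_derivative exp (- (lamS * t)) * (- lamS)) (at t within {0..T})"
        by (auto intro!: derivative_eq_intros)
      have "((\<lambda>s. xS (x s) - xS x0 * exp (- (lamS * s))) has_real_derivative
          fS P \<theta> t (\<beta> t) (y t) - xS x0 * (exp (- (lamS * t)) * (- lamS))) (at t within {0..T})"
        by (intro DERIV_diff dS[OF t] DERIV_cmult e)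
      thus "((\<lambda>s. xS (x s) - q s) has_real_derivative fS P \<theta> t (\<beta> t) (y t) + lamS * q t) (at t within {0..T})"
        unfolding q_def by (rule DERIV_cong) (simp add: algebra_simps)
    qed
    show "0 \<le> xS (x 0) - q 0" using x00 by (simp add: q_def)
    fix t assume t: "t \<in> {0..T}" and n: "xS (x t) - q t < 0"
    have qt: "n1 \<le> q t" using n1_le[of t] t by (simp add: q_def)
    have c: "xS (y t) \<le> q t" using qt n by (simp add: y_def cl_def)
    have fl: "- ((eEfc P + eEpc P + eIfc P + eIpc P + eH P) + mu P) * xS (y t) \<le> fS P \<theta> t (\<beta> t) (y t)"
      by (rule fS_lower[OF adm bnd[OF t] yp(1-8)])
    have "lamS * xS (y t) \<le> lamS * q t" using c lamS by (intro mult_left_mono) auto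
    thus "0 \<le> fS P \<theta> t (\<beta> t) (y t) + lamS * q t" using fl unfolding lamS_def es_def by linarith
  qed
  have xnn: "n1 \<le> xS (x t)" "0 \<le> xEfc (x t)" "0 \<le> xEpc (x t)" "0 \<le> xIfc (x t)" "0 \<le> xIpc (x t)"
    "0 \<le> xH (x t)" "0 \<le> xR (x t)" if t: "t \<in> {0..T}" for t
  proof -
    have "n1 \<le> q t" using n1_le[of t] t by (simp add: q_def)
    thus "n1 \<le> xS (x t)" using pS t by fastforce
    show "0 \<le> xEfc (x t)" "0 \<le> xEpc (x t)" "0 \<le> xIfc (x t)" "0 \<le> xIpc (x t)" "0 \<le> xH (x t)" "0 \<le> xR (x t)"
      using pEfc pEpc pIfc pIpc pH pR t by simp_all
  qed
  have dI: "0 < dI P" and dHp: "0 < dH P" using adm unfolding admissible_params_def by auto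
  have pN: "\<forall>t\<in>{0..T}. 0 \<le> K0 - Ntot (x t)"
  proof (rule positivity[of T "\<lambda>s. K0 - Ntot (x s)" "\<lambda>t. - (fS P \<theta> t (\<beta> t) (y t) + fEfc P \<theta> t (\<beta> t) (y t)
      + fEpc P \<theta> t (\<beta> t) (y t) + fIfc P \<theta> t (\<beta> t) (y t) + fIpc P \<theta> t (\<beta> t) (y t) + fH P \<theta> t (\<beta> t) (y t)
      + fR P \<theta> t (\<beta> t) (y t))", OF T0])
    show "\<forall>t\<in>{0..T}. ((\<lambda>s. K0 - Ntot (x s)) has_real_derivative - (fS P \<theta> t (\<beta> t) (y t) + fEfc P \<theta> t (\<beta> t) (y t)
      + fEpc P \<theta> t (\<beta> t) (y t) + fIfc P \<theta> t (\<beta> t) (y t) + fIpc P \<theta> t (\<beta> t) (y t) + fH P \<theta> t (\<beta> t) (y t)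
      + fR P \<theta> t (\<beta> t) (y t))) (at t within {0..T})"
    proof
      fix t assume t: "t \<in> {0..T}"
      have "((\<lambda>s. Ntot (x s)) has_real_derivative (fS P \<theta> t (\<beta> t) (y t) + fEfc P \<theta> t (\<beta> t) (y t)
      + fEpc P \<theta> t (\<beta> t) (y t) + fIfc P \<theta> t (\<beta> t) (y t) + fIpc P \<theta> t (\<beta> t) (y t) + fH P \<theta> t (\<beta> t) (y t)
      + fR P \<theta> t (\<beta> t) (y t))) (at t within {0..T})"
        unfolding Ntot_def by (intro DERIV_add dS[OF t] dEfc[OF t] dEpc[OF t] dIfc[OF t] dIpc[OF t] dH[OF t] dR[OF t])
      from DERIV_diff[OF DERIV_const this]
      show "((\<lambda>s. K0 - Ntot (x s)) has_real_derivative - (fS P \<theta> t (\<beta> t) (y t) + fEfc P \<theta> t (\<beta> t) (y t)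
      + fEpc P \<theta> t (\<beta> t) (y t) + fIfc P \<theta> t (\<beta> t) (y t) + fIpc P \<theta> t (\<beta> t) (y t) + fH P \<theta> t (\<beta> t) (y t)
      + fR P \<theta> t (\<beta> t) (y t))) (at t within {0..T})" by simp
    qed
    show "0 \<le> K0 - Ntot (x 0)" using x00 K0 by simp
    fix t assume t: "t \<in> {0..T}" and n: "K0 - Ntot (x t) < 0"
    note xt = xnn[OF t]
    have yN: "K0 \<le> Ntot (y t)"
      using xt n n1_pos K0(3) unfolding y_def Ntot_def Cst_simps cl_def max_def min_def by (smt (verit))
    have "mu P * K0 \<le> mu P * Ntot (y t)" using yN mu by (intro mult_left_mono) auto
    moreover have "0 \<le> dI P * (xIfc (y t) + xIpc (y t))" "0 \<le> dH P * xH (y t)"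
      using dI dHp yp(5,6,7)[of t] by simp_all
    ultimately show "0 \<le> - (fS P \<theta> t (\<beta> t) (y t) + fEfc P \<theta> t (\<beta> t) (y t)
      + fEpc P \<theta> t (\<beta> t) (y t) + fIfc P \<theta> t (\<beta> t) (y t) + fIpc P \<theta> t (\<beta> t) (y t) + fH P \<theta> t (\<beta> t) (y t)
      + fR P \<theta> t (\<beta> t) (y t))"
      unfolding field_sum using psum[of t] K0(4) by linarith
  qed
  have gx: "good (x t)" if t: "t \<in> {0..T}" for t
    unfolding good_def using xnn[OF t] pN t by simp
  have yx: "y t = x t" if t: "t \<in> {0..T}" for t unfolding y_def by (rule Cst_id[OF gx[OF t]])
  have "is_solution P T \<theta> \<beta> x0 x"
    unfolding sol_iff using x00 dS dEfc dEpc dIfc dIpc dH dR yx by simp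
  thus ?thesis using gx by blast
qed

end



context main begin

lemma uniq:
  assumes ab: "admb \<beta>" and xs: "is_solution P T \<theta> \<beta> x0 x" and xg: "\<forall>t\<in>{0..T}. good (x t)"
    and zs: "is_solution P T \<theta> \<beta> x0 z"
  shows "\<forall>t\<in>{0..T}. z t = x t"
proof -
  obtain L where L: "L \<ge> 0" and DB: "\<forall>t b1 b2 a w. t \<in> {0..T} \<longrightarrow> b1 \<in> {0..1} \<longrightarrow> b2 \<in> {0..1} \<longrightarrow> a \<in> Rg (n1/2) (K0+1)
      \<longrightarrow> w \<in> Rg (n1/2) (K0+1) \<longrightarrow> dsum t b1 b2 a w \<le> 21 * L * sdist2 a w + L * (b1 - b2)^2"
    using dbound by blast
  define u where "u t = sdist2 (x t) (z t)" for t
  define u' where "u' t = dsum t (\<beta> t) (\<beta> t) (x t) (z t)" for t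
  define del where "del = min 1 (n1/14)"
  have del: "0 < del" using n1_pos by (simp add: del_def)
  have ud: "(u has_real_derivative u' t) (at t within {0..T})" if "t \<in> {0..T}" for t
    unfolding u_def u'_def by (rule u_deriv[OF xs zs that])
  have ucont: "continuous_on {0..T} u" by (rule deriv_cont_on[where u' = u']) (use ud in simp)
  have unn: "0 \<le> u t" for t unfolding u_def by (rule sdist2_nonneg)
  have x0e: "x 0 = x0" using xs unfolding sol_iff by simp
  have z0e: "z 0 = x0" using zs unfolding sol_iff by simp
  have u0: "u 0 = 0" using x0e z0e by (simp add: u_def sdist2_def)
  have ubd: "u' t \<le> 21 * L * u t" if t: "t \<in> {0..T}" and small: "u t < del^2" for t
  proof -
    have xR: "x t \<in> Rg (n1/2) (K0+1)" using good_Rg xg t by simp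
    have zR: "z t \<in> Rg (n1/2) (K0+1)"
      by (rule near_good_Rg) (use xg t small in \<open>simp_all add: u_def del_def\<close>)
    have b: "\<beta> t \<in> {0..1}" using admb_b[OF ab t] by simp
    show ?thesis using DB[rule_format, OF t b b xR zR] by (simp add: u_def u'_def)
  qed
  have uz: "\<forall>t\<in>{0..T}. u t = 0"
  proof (rule ccontr)
    assume "\<not> ?thesis"
    then obtain t1 where t1: "t1 \<in> {0..T}" "u t1 \<noteq> 0" by blast
    define A where "A = {0..t1} \<inter> u -` {0}"
    have cA: "continuous_on {0..t1} u" using continuous_on_subset[OF ucont] t1(1) by auto
    have "closed A" unfolding A_def by (rule continuous_closed_preimage[OF cA]) auto
    moreover have "0 \<in> A" using u0 t1 by (auto simp: A_def)
    moreover have bdd: "bdd_above A" unfolding A_def by (rule bdd_aboveI[of _ t1]) auto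
    ultimately have SA: "Sup A \<in> A" by (intro closed_contains_Sup) auto
    define t0 where "t0 = Sup A"
    have t0: "0 \<le> t0" "t0 \<le> t1" "u t0 = 0" using SA by (auto simp: A_def t0_def)
    have t0T: "t0 \<in> {0..T}" using t0 t1 by auto
    have "t0 \<noteq> t1" using t0 t1 by auto
    hence t01: "t0 < t1" using t0 by simp
    have d2: "0 < del^2" using del by simp
    have "\<forall>x\<in>{0..T}. \<forall>e>0. \<exists>d>0. \<forall>x'\<in>{0..T}. dist x' x < d \<longrightarrow> dist (u x') (u x) < e"
      using ucont unfolding continuous_on_iff .
    hence "\<exists>d>0. \<forall>x'\<in>{0..T}. dist x' t0 < d \<longrightarrow> dist (u x') (u t0) < del^2"
      using t0T d2 by blast
    then obtain eta where eta: "eta > 0" "\<And>s. s \<in> {0..T} \<Longrightarrow> dist s t0 < eta \<Longrightarrow> dist (u s) (u t0) < del^2"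
      by blast
    define t2 where "t2 = min t1 (t0 + eta/2)"
    have t2: "t0 < t2" "t2 \<le> t1" using t01 eta by (auto simp: t2_def)
    have small: "u s < del^2" if s: "s \<in> {t0..t2}" for s
    proof -
      have sT: "s \<in> {0..T}" using s t0 t1 t2 by auto
      have "dist s t0 < eta" using s eta(1) by (auto simp: dist_real_def t2_def)
      hence "dist (u s) (u t0) < del^2" using eta(2)[OF sT] by simp
      thus ?thesis using t0 by (simp add: dist_real_def)
    qed
    have "u t2 \<le> exp (21 * L * (t2 - t0)) * (u t0 + integral {t0..t2} (\<lambda>s. 0))"
    proof (rule gronwall[of t0 t2 u u' "21 * L" "\<lambda>s. 0"])
      show "t0 \<le> t2" using t2 by simp
      show "\<forall>t\<in>{t0..t2}. (u has_real_derivative u' t) (at t within {t0..t2})"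
      proof
        fix t assume t: "t \<in> {t0..t2}"
        hence "t \<in> {0..T}" "{t0..t2} \<subseteq> {0..T}" using t0 t1 t2 by auto
        thus "(u has_real_derivative u' t) (at t within {t0..t2})" using ud DERIV_subset by blast
      qed
      fix t assume t: "t \<in> {t0..t2}"
      hence "t \<in> {0..T}" using t0 t1 t2 by auto
      thus "u' t \<le> 21 * L * u t + 0" using ubd small[OF t] by simp
    qed (use L in auto)
    hence "u t2 \<le> 0" using t0 by simp
    hence "u t2 = 0" using unn[of t2] by simp
    hence "t2 \<in> A" using t2 t0 by (auto simp: A_def)
    hence "t2 \<le> t0" unfolding t0_def using bdd by (rule cSup_upper)
    thus False using t2 by simp
  qed
  show ?thesis
  proof
    fix t assume t: "t \<in> {0..T}"
    have "sdist2 (x t) (z t) = 0" using uz t by (simp add: u_def)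
    thus "z t = x t" by (rule sdist2_zero[THEN sym])
  qed
qed

lemma stab:
  "\<exists>C>0. \<forall>\<beta> \<beta>' x x'. admb \<beta> \<and> admb \<beta>' \<and> is_solution P T \<theta> \<beta> x0 x \<and> is_solution P T \<theta> \<beta>' x0 x' \<longrightarrow>
     (\<forall>t\<in>{0..T}. sdist2 (x t) (x' t) \<le> C * integral {0..t} (\<lambda>s. (\<beta> s - \<beta>' s)^2))"
proof -
  obtain L where L: "L \<ge> 0" and DB: "\<forall>t b1 b2 a w. t \<in> {0..T} \<longrightarrow> b1 \<in> {0..1} \<longrightarrow> b2 \<in> {0..1} \<longrightarrow> a \<in> Rg (n1/2) (K0+1)
      \<longrightarrow> w \<in> Rg (n1/2) (K0+1) \<longrightarrow> dsum t b1 b2 a w \<le> 21 * L * sdist2 a w + L * (b1 - b2)^2"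
    using dbound by blast
  define C where "C = exp (21 * L * T) * L + 1"
  have C: "0 < C" using L by (simp add: C_def add_nonneg_pos)
  show ?thesis
  proof (intro exI[of _ C] conjI allI impI ballI)
    show "0 < C" by (rule C)
    fix \<beta> \<beta>' x x' t
    assume h: "admb \<beta> \<and> admb \<beta>' \<and> is_solution P T \<theta> \<beta> x0 x \<and> is_solution P T \<theta> \<beta>' x0 x'" and t: "t \<in> {0..T}"
    have ab: "admb \<beta>" and ab': "admb \<beta>'" and xs: "is_solution P T \<theta> \<beta> x0 x"
      and xs': "is_solution P T \<theta> \<beta>' x0 x'" using h by simp_all
    obtain xg where xg: "is_solution P T \<theta> \<beta> x0 xg" "\<forall>t\<in>{0..T}. good (xg t)" using exist[OF ab] by blast
    obtain xg' where xg': "is_solution P T \<theta> \<beta>' x0 xg'" "\<forall>t\<in>{0..T}. good (xg' t)" using exist[OF ab'] by blast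
    have ex: "\<forall>t\<in>{0..T}. x t = xg t" by (rule uniq[OF ab xg(1) xg(2) xs])
    have ex': "\<forall>t\<in>{0..T}. x' t = xg' t" by (rule uniq[OF ab' xg'(1) xg'(2) xs'])
    have gx: "good (x s)" if "s \<in> {0..T}" for s using ex xg(2) that by simp
    have gx': "good (x' s)" if "s \<in> {0..T}" for s using ex' xg'(2) that by simp
    define u where "u s = sdist2 (x s) (x' s)" for s
    define u' where "u' s = dsum s (\<beta> s) (\<beta>' s) (x s) (x' s)" for s
    define g where "g s = L * (\<beta> s - \<beta>' s)^2" for s
    have bc: "continuous_on {0..t} \<beta>" "continuous_on {0..t} \<beta>'"
      using ab ab' t unfolding admb_def by (auto intro: continuous_on_subset)
    have gc: "continuous_on {0..t} g" unfolding g_def by (intro continuous_intros bc)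
    have "u t \<le> exp (21 * L * (t - 0)) * (u 0 + integral {0..t} g)"
    proof (rule gronwall[of 0 t u u' "21 * L" g])
      show "0 \<le> t" using t by simp
      show "\<forall>s\<in>{0..t}. (u has_real_derivative u' s) (at s within {0..t})"
      proof
        fix s assume s: "s \<in> {0..t}"
        hence sT: "s \<in> {0..T}" "{0..t} \<subseteq> {0..T}" using t by auto
        have "(u has_real_derivative u' s) (at s within {0..T})"
          unfolding u_def u'_def by (rule u_deriv[OF xs xs' sT(1)])
        thus "(u has_real_derivative u' s) (at s within {0..t})" using sT(2) by (rule DERIV_subset)
      qed
      show "continuous_on {0..t} g" by (rule gc)
      fix s assume s: "s \<in> {0..t}"
      hence sT: "s \<in> {0..T}" using t by auto
      have b: "\<beta> s \<in> {0..1}" "\<beta>' s \<in> {0..1}" using admb_b[OF ab sT] admb_b[OF ab' sT] by simp_all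
      show "u' s \<le> 21 * L * u s + g s"
        using DB[rule_format, OF sT b(1) b(2) good_Rg[OF gx[OF sT]] good_Rg[OF gx'[OF sT]]]
        by (simp add: u_def u'_def g_def)
      show "0 \<le> g s" unfolding g_def using L by simp
    qed (use L in simp)
    moreover have "u 0 = 0"
    proof -
      have "x 0 = x0" "x' 0 = x0" using xs xs' unfolding sol_iff by simp_all
      thus ?thesis by (simp add: u_def sdist2_def)
    qed
    moreover have Ieq: "integral {0..t} g = L * integral {0..t} (\<lambda>s. (\<beta> s - \<beta>' s)^2)"
      unfolding g_def by (rule Henstock_Kurzweil_Integration.integral_mult_right)
    moreover have I0: "0 \<le> integral {0..t} (\<lambda>s. (\<beta> s - \<beta>' s)^2)"
    proof (rule Henstock_Kurzweil_Integration.integral_nonneg)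
      show "(\<lambda>s. (\<beta> s - \<beta>' s)^2) integrable_on {0..t}"
        by (rule integrable_continuous_real) (intro continuous_intros bc)
    qed simp
    ultimately have "u t \<le> exp (21 * L * t) * (L * integral {0..t} (\<lambda>s. (\<beta> s - \<beta>' s)^2))" by simp
    also have "\<dots> \<le> exp (21 * L * T) * (L * integral {0..t} (\<lambda>s. (\<beta> s - \<beta>' s)^2))"
    proof (rule mult_right_mono)
      have "21 * L * t \<le> 21 * L * T" using L t by (intro mult_left_mono) auto
      thus "exp (21 * L * t) \<le> exp (21 * L * T)" by simp
      show "0 \<le> L * integral {0..t} (\<lambda>s. (\<beta> s - \<beta>' s)^2)" using L I0 by simp
    qed
    also have "\<dots> \<le> C * integral {0..t} (\<lambda>s. (\<beta> s - \<beta>' s)^2)"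
      unfolding C_def using I0 by (simp add: algebra_simps)
    finally show "sdist2 (x t) (x' t) \<le> C * integral {0..t} (\<lambda>s. (\<beta> s - \<beta>' s)^2)" by (simp add: u_def)
  qed
qed

end

theorem proposition3:
  fixes P :: params and T \<beta>lo \<beta>hi :: real and \<theta> :: "real \<Rightarrow> real" and x0 :: state
  assumes "admissible_params P"
    and "0 < \<beta>lo" and "\<beta>lo \<le> \<beta>hi" and "\<beta>hi \<le> 1"
    and "0 < T"
    and "continuous_on {0..T} \<theta>" and "\<forall>t\<in>{0..T}. 0 \<le> \<theta> t \<and> \<theta> t \<le> 1"
    and "0 < xS x0" and "0 \<le> xEfc x0" and "0 \<le> xEpc x0" and "0 \<le> xIfc x0"
    and "0 \<le> xIpc x0" and "0 \<le> xH x0" and "0 \<le> xR x0"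
  shows
    "(\<forall>\<beta>. continuous_on {0..T} \<beta> \<and> (\<forall>t\<in>{0..T}. \<beta>lo \<le> \<beta> t \<and> \<beta> t \<le> \<beta>hi) \<longrightarrow>
        (\<exists>x. is_solution P T \<theta> \<beta> x0 x \<and>
           (\<forall>y. is_solution P T \<theta> \<beta> x0 y \<longrightarrow> (\<forall>t\<in>{0..T}. y t = x t)))) \<and>
     (\<exists>C>0. \<forall>\<beta> \<beta>' x x'.
        continuous_on {0..T} \<beta> \<and> (\<forall>t\<in>{0..T}. \<beta>lo \<le> \<beta> t \<and> \<beta> t \<le> \<beta>hi) \<and>
        continuous_on {0..T} \<beta>' \<and> (\<forall>t\<in>{0..T}. \<beta>lo \<le> \<beta>' t \<and> \<beta>' t \<le> \<beta>hi) \<and>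
        is_solution P T \<theta> \<beta> x0 x \<and> is_solution P T \<theta> \<beta>' x0 x' \<longrightarrow>
        (\<forall>t\<in>{0..T}. sdist2 (x t) (x' t) \<le> C * integral {0..t} (\<lambda>s. (\<beta> s - \<beta>' s)\<^sup>2)))"
proof -
  interpret M: main P T \<beta>lo \<beta>hi \<theta> x0
    by unfold_locales (use assms in auto)
  have A: "\<forall>\<beta>. continuous_on {0..T} \<beta> \<and> (\<forall>t\<in>{0..T}. \<beta>lo \<le> \<beta> t \<and> \<beta> t \<le> \<beta>hi) \<longrightarrow>
        (\<exists>x. is_solution P T \<theta> \<beta> x0 x \<and>
           (\<forall>y. is_solution P T \<theta> \<beta> x0 y \<longrightarrow> (\<forall>t\<in>{0..T}. y t = x t)))"
  proof (intro allI impI)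
    fix \<beta> assume "continuous_on {0..T} \<beta> \<and> (\<forall>t\<in>{0..T}. \<beta>lo \<le> \<beta> t \<and> \<beta> t \<le> \<beta>hi)"
    hence ab: "M.admb \<beta>" unfolding M.admb_def .
    obtain x where x: "is_solution P T \<theta> \<beta> x0 x" "\<forall>t\<in>{0..T}. M.good (x t)" using M.exist[OF ab] by blast
    show "\<exists>x. is_solution P T \<theta> \<beta> x0 x \<and> (\<forall>y. is_solution P T \<theta> \<beta> x0 y \<longrightarrow> (\<forall>t\<in>{0..T}. y t = x t))"
    proof (intro exI[of _ x] conjI allI impI)
      show "is_solution P T \<theta> \<beta> x0 x" by (rule x(1))
      fix y assume "is_solution P T \<theta> \<beta> x0 y"
      thus "\<forall>t\<in>{0..T}. y t = x t" by (rule M.uniq[OF ab x(1) x(2)])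
    qed
  qed
  obtain C where C: "C > 0" and H: "\<forall>\<beta> \<beta>' x x'. M.admb \<beta> \<and> M.admb \<beta>' \<and> is_solution P T \<theta> \<beta> x0 x \<and> is_solution P T \<theta> \<beta>' x0 x' \<longrightarrow>
     (\<forall>t\<in>{0..T}. sdist2 (x t) (x' t) \<le> C * integral {0..t} (\<lambda>s. (\<beta> s - \<beta>' s)^2))"
    using M.stab by blast
  have B: "\<exists>C>0. \<forall>\<beta> \<beta>' x x'.
        continuous_on {0..T} \<beta> \<and> (\<forall>t\<in>{0..T}. \<beta>lo \<le> \<beta> t \<and> \<beta> t \<le> \<beta>hi) \<and>
        continuous_on {0..T} \<beta>' \<and> (\<forall>t\<in>{0..T}. \<beta>lo \<le> \<beta>' t \<and> \<beta>' t \<le> \<beta>hi) \<and>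
        is_solution P T \<theta> \<beta> x0 x \<and> is_solution P T \<theta> \<beta>' x0 x' \<longrightarrow>
        (\<forall>t\<in>{0..T}. sdist2 (x t) (x' t) \<le> C * integral {0..t} (\<lambda>s. (\<beta> s - \<beta>' s)\<^sup>2))"
  proof (intro exI[of _ C] conjI allI impI)
    show "0 < C" by (rule C)
    fix \<beta> \<beta>' x x'
    assume hh: "continuous_on {0..T} \<beta> \<and> (\<forall>t\<in>{0..T}. \<beta>lo \<le> \<beta> t \<and> \<beta> t \<le> \<beta>hi) \<and>
        continuous_on {0..T} \<beta>' \<and> (\<forall>t\<in>{0..T}. \<beta>lo \<le> \<beta>' t \<and> \<beta>' t \<le> \<beta>hi) \<and>
        is_solution P T \<theta> \<beta> x0 x \<and> is_solution P T \<theta> \<beta>' x0 x'"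
    have "M.admb \<beta> \<and> M.admb \<beta>' \<and> is_solution P T \<theta> \<beta> x0 x \<and> is_solution P T \<theta> \<beta>' x0 x'"
      unfolding M.admb_def using hh by simp
    thus "\<forall>t\<in>{0..T}. sdist2 (x t) (x' t) \<le> C * integral {0..t} (\<lambda>s. (\<beta> s - \<beta>' s)\<^sup>2)"
      using H by simp
  qed
  show ?thesis by (rule conjI[OF A B])
qed



end
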